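(* Define, for $0<v<1$, $$C(v)=\int_1^\infty\frac{L(u)\,\ell(u,v)}{(u^2-v^2)^2}\,du.$$ Then: (i) as $v\downarrow0$, $C(v)=c_0\log\frac1v+d_0+O\big(v^2\log(1/v)\big)$, where $c_0=\int_1^\infty\frac{L(u)}{u^4}du$ and $d_0=\int_1^\infty\frac{L(u)\log(1/u)}{u^4}du$; (ii) $C\in L^1(0,1)$ and $vC(v)\in L^1(0,1)$; (iii) as $y\to\infty$, $$\int_0^1C(v)\cos(vy)\,dv=O\Big(\frac{(\log y)^2}{y}\Big),\qquad\int_0^1vC(v)\sin(vy)\,dv=O\Big(\frac{(\log y)^2}{y}\Big).$$
   Context: For $u>1$ let $L(u)=\log\frac{u+1}{u-1}$, and for $u\ge1$, $0<v\le1$ let $\ell(u,v)=\log\frac{1}{uv}$. *)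

theory Defs
  imports "HOL-Analysis.Analysis" "HOL-Library.Landau_Symbols"
begin

definition Lf :: "real \<Rightarrow> real" where
  "Lf u = ln ((u + 1) / (u - 1))"

definition ellf :: "real \<Rightarrow> real \<Rightarrow> real" where
  "ellf u v = ln (1 / (u * v))"

definition Cint :: "real \<Rightarrow> real \<Rightarrow> real" where
  "Cint v u = Lf u * ellf u v / (u\<^sup>2 - v\<^sup>2)\<^sup>2"

definition Cf :: "real \<Rightarrow> real" where
  "Cf v = (LBINT u:{1<..}. Cint v u)"

definition c0 :: real where
  "c0 = (LBINT u:{1<..}. Lf u / u ^ 4)"

definition d0 :: real where
  "d0 = (LBINT u:{1<..}. Lf u * ln (1 / u) / u ^ 4)"

end

theory Submission
  imports Defs "HOL-Real_Asymp.Real_Asymp"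
begin


lemma DERIV_ln_eq:
  assumes "(g has_real_derivative g') (at x within S)" "0 < g x" "D = g' / g x"
  shows "((\<lambda>x. ln (g x)) has_real_derivative D) (at x within S)"
  using DERIV_chain2[OF DERIV_ln_divide[OF assms(2)] assms(1)] assms(3) by simp

lemma FTC_Ioo:
  fixes f F :: "real \<Rightarrow> real"
  assumes "a < b"
    and "\<And>x. a < x \<Longrightarrow> x < b \<Longrightarrow> DERIV F x :> f x"
    and "\<And>x. a < x \<Longrightarrow> x < b \<Longrightarrow> isCont f x"
    and "\<And>x. a < x \<Longrightarrow> x < b \<Longrightarrow> 0 \<le> f x"
    and "(F \<longlongrightarrow> A) (at_right a)" "(F \<longlongrightarrow> B) (at_left b)"
  shows "set_integrable lborel {a<..<b} f \<and> (LBINT x:{a<..<b}. f x) = B - A"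
proof -
  have *: "set_integrable lborel (einterval (ereal a) (ereal b)) f \<and> (LBINT x=ereal a..ereal b. f x) = B - A"
    using interval_integral_FTC_nonneg[of "ereal a" "ereal b" F f A B] assms
    by (auto simp: ereal_tendsto_simps1)
  then show ?thesis using assms(1) by (simp add: interval_integral_Ioo)
qed

lemma FTC_Ioi:
  fixes f F :: "real \<Rightarrow> real"
  assumes "\<And>x. a < x \<Longrightarrow> DERIV F x :> f x"
    and "\<And>x. a < x \<Longrightarrow> isCont f x"
    and "\<And>x. a < x \<Longrightarrow> 0 \<le> f x"
    and "(F \<longlongrightarrow> A) (at_right a)" "(F \<longlongrightarrow> B) at_top"
  shows "set_integrable lborel {a<..} f \<and> (LBINT x:{a<..}. f x) = B - A"
proof -
  have *: "set_integrable lborel (einterval (ereal a) \<infinity>) f \<and> (LBINT x=ereal a..\<infinity>. f x) = B - A"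
    using interval_integral_FTC_nonneg[of "ereal a" "\<infinity>" F f A B] assms
    by (auto simp: ereal_tendsto_simps1)
  then show ?thesis by (simp add: interval_integral_to_infinity_eq)
qed

lemma int_ln_sing:
  fixes a c x0 :: real
  assumes "0 < a" "a \<le> c"
  shows "set_integrable lborel {x0<..<x0+a} (\<lambda>u. ln (c / (u - x0)))
    \<and> (LBINT u:{x0<..<x0+a}. ln (c / (u - x0))) = a * (1 + ln (c / a))"
proof -
  have "set_integrable lborel {x0<..<x0+a} (\<lambda>u. ln (c / (u - x0)))
    \<and> (LBINT u:{x0<..<x0+a}. ln (c / (u - x0))) = a * (1 + ln (c / a)) - 0"
  proof (rule FTC_Ioo[where F="\<lambda>u. (u - x0) * (1 + ln (c / (u - x0)))"])
    fix x assume x: "x0 < x" "x < x0 + a"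
    have e: "\<And>u. x0 < u \<Longrightarrow> (u - x0) * (1 + ln (c / (u - x0))) = (u - x0) * (1 + ln c - ln (u - x0))"
      using assms by (simp add: ln_div)
    have "DERIV (\<lambda>u. (u - x0) * (1 + ln c - ln (u - x0))) x :> ln c - ln (x - x0)"
      using x assms by (auto intro!: derivative_eq_intros DERIV_ln_eq)
    then have "DERIV (\<lambda>u. (u - x0) * (1 + ln (c / (u - x0)))) x :> ln c - ln (x - x0)"
      by (rule has_field_derivative_transform_within_open[where S="{x0<..}"]) (use x e in auto)
    then show "DERIV (\<lambda>u. (u - x0) * (1 + ln (c / (u - x0)))) x :> ln (c / (x - x0))"
      using x assms by (simp add: ln_div)
    show "isCont (\<lambda>u. ln (c / (u - x0))) x"
      using x assms by (auto intro!: continuous_intros)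
    have "1 \<le> c / (x - x0)" using x assms by (simp add: field_simps)
    then show "0 \<le> ln (c / (x - x0))" by simp
  next
    show "((\<lambda>u. (u - x0) * (1 + ln (c / (u - x0)))) \<longlongrightarrow> 0) (at_right x0)"
      using assms by real_asymp
    have "((\<lambda>u. (u - x0) * (1 + ln (c / (u - x0)))) \<longlongrightarrow> a * (1 + ln (c * inverse a))) (at_left (x0 + a))"
      using assms by real_asymp
    then show "((\<lambda>u. (u - x0) * (1 + ln (c / (u - x0)))) \<longlongrightarrow> a * (1 + ln (c / a))) (at_left (x0 + a))"
      by (simp add: divide_inverse)
  qed (use assms in auto)
  then show ?thesis by simp
qed

lemma int_inv_sq:
  fixes a b x0 :: real
  assumes "x0 < a" "a < b"
  shows "set_integrable lborel {a<..<b} (\<lambda>u. 1 / (u - x0)\<^sup>2)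
    \<and> (LBINT u:{a<..<b}. 1 / (u - x0)\<^sup>2) = 1 / (a - x0) - 1 / (b - x0)"
proof -
  have "set_integrable lborel {a<..<b} (\<lambda>u. 1 / (u - x0)\<^sup>2)
    \<and> (LBINT u:{a<..<b}. 1 / (u - x0)\<^sup>2) = (- 1 / (b - x0)) - (- 1 / (a - x0))"
  proof (rule FTC_Ioo[where F="\<lambda>u. - 1 / (u - x0)"])
    fix x assume x: "a < x" "x < b"
    show "DERIV (\<lambda>u. - 1 / (u - x0)) x :> 1 / (x - x0)\<^sup>2"
      using x assms by (auto intro!: derivative_eq_intros simp: field_simps power2_eq_square)
    show "isCont (\<lambda>u. 1 / (u - x0)\<^sup>2) x"
      using x assms by (auto intro!: continuous_intros)
  next
    show "((\<lambda>u. - 1 / (u - x0)) \<longlongrightarrow> - 1 / (a - x0)) (at_right a)"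
      using assms by (intro tendsto_eq_intros refl) auto
    show "((\<lambda>u. - 1 / (u - x0)) \<longlongrightarrow> - 1 / (b - x0)) (at_left b)"
      using assms by (intro tendsto_eq_intros refl) auto
  qed (use assms in auto)
  then show ?thesis by simp
qed

lemma int_cube_tail: "set_integrable lborel {2<..} (\<lambda>u::real. 4 / u ^ 3)
    \<and> (LBINT u:{2<..}. 4 / (u::real) ^ 3) = 1/2"
proof -
  have "set_integrable lborel {2<..} (\<lambda>u::real. 4 / u ^ 3)
    \<and> (LBINT u:{2<..}. 4 / (u::real) ^ 3) = 0 - (- 1/2)"
  proof (rule FTC_Ioi[where F="\<lambda>u. - 2 / u\<^sup>2" and a=2 and A="-1/2" and B=0])
    fix x :: real assume x: "2 < x"
    show "DERIV (\<lambda>u. - 2 / u\<^sup>2) x :> 4 / x ^ 3"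
      using x by (auto intro!: derivative_eq_intros simp: field_simps power2_eq_square power3_eq_cube)
    show "isCont (\<lambda>u. 4 / u ^ 3) x"
      using x by (auto intro!: continuous_intros)
    show "0 \<le> 4 / x ^ 3" using x by simp
  next
    show "((\<lambda>u::real. - 2 / u\<^sup>2) \<longlongrightarrow> - 1/2) (at_right 2)"
      by real_asymp
    show "((\<lambda>u::real. - 2 / u\<^sup>2) \<longlongrightarrow> 0) at_top"
      by real_asymp
  qed
  then show ?thesis by simp
qed

lemma int_logsq_end:
  fixes h :: real
  assumes "0 < h" "h \<le> 1"
  shows "set_integrable lborel {1-h<..<1} (\<lambda>v. (1 - ln (1 - v))\<^sup>2)
    \<and> (LBINT v:{1-h<..<1}. (1 - ln (1 - v))\<^sup>2) = h * ((1 - ln h)\<^sup>2 + 2 * (1 - ln h) + 2)"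
proof -
  let ?F = "\<lambda>v::real. - (1 - v) * ((1 - ln (1 - v))\<^sup>2 + 2 * (1 - ln (1 - v)) + 2)"
  have "set_integrable lborel {1-h<..<1} (\<lambda>v. (1 - ln (1 - v))\<^sup>2)
    \<and> (LBINT v:{1-h<..<1}. (1 - ln (1 - v))\<^sup>2) = 0 - (- h * ((1 - ln h)\<^sup>2 + 2 * (1 - ln h) + 2))"
  proof (rule FTC_Ioo[where F="?F"])
    fix x assume x: "1 - h < x" "x < 1"
    have "x < 1" using x assms by simp
    show "DERIV ?F x :> (1 - ln (1 - x))\<^sup>2"
      apply (insert \<open>x < 1\<close>)
      apply (rule derivative_eq_intros DERIV_ln_eq refl | force)+
      apply (simp add: divide_simps)
      apply (simp add: algebra_simps power2_eq_square)
      done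
    show "isCont (\<lambda>v. (1 - ln (1 - v))\<^sup>2) x"
      using x assms by (auto intro!: continuous_intros)
  next
    show "(?F \<longlongrightarrow> - h * ((1 - ln h)\<^sup>2 + 2 * (1 - ln h) + 2)) (at_right (1 - h))"
      using assms by (intro tendsto_eq_intros refl) auto
    show "(?F \<longlongrightarrow> 0) (at_left 1)"
      by real_asymp
  qed (use assms in auto)
  then show ?thesis by simp
qed

lemma int_log_over:
  fixes h :: real
  assumes "0 < h" "h < 1/2"
  shows "set_integrable lborel {1/2<..<1-h} (\<lambda>v. (1 - ln (1 - v)) / (1 - v))
    \<and> (LBINT v:{1/2<..<1-h}. (1 - ln (1 - v)) / (1 - v)) = ((1 - ln h)\<^sup>2 - (1 + ln 2)\<^sup>2) / 2"
proof -
  let ?F = "\<lambda>v::real. (1 - ln (1 - v))\<^sup>2 / 2"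
  have "set_integrable lborel {1/2<..<1-h} (\<lambda>v. (1 - ln (1 - v)) / (1 - v))
    \<and> (LBINT v:{1/2<..<1-h}. (1 - ln (1 - v)) / (1 - v)) = (1 - ln h)\<^sup>2 / 2 - (1 + ln 2)\<^sup>2 / 2"
  proof (rule FTC_Ioo[where F="?F"])
    fix x assume x: "1/2 < x" "x < 1 - h"
    have "x < 1" using x assms by simp
    show "DERIV ?F x :> (1 - ln (1 - x)) / (1 - x)"
      apply (insert \<open>x < 1\<close>)
      apply (rule derivative_eq_intros DERIV_ln_eq refl | force)+
      apply (simp add: divide_simps)
      apply (simp add: algebra_simps power2_eq_square)
      done
    show "isCont (\<lambda>v. (1 - ln (1 - v)) / (1 - v)) x"
      using x assms by (auto intro!: continuous_intros)
    have "ln (1 - x) \<le> 0" using x assms by simp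
    then have "0 \<le> 1 - ln (1 - x)" by simp
    then show "0 \<le> (1 - ln (1 - x)) / (1 - x)" by (rule divide_nonneg_pos) (use x assms in auto)
  next
    have "ln (1/2::real) = - ln 2" by (simp add: ln_div)
    then have e: "(1 + ln 2)\<^sup>2 / 2 = (1 - ln (1 - 1/2::real))\<^sup>2 / 2" by simp
    show "(?F \<longlongrightarrow> (1 + ln 2)\<^sup>2 / 2) (at_right (1/2))"
      unfolding e by (intro tendsto_intros continuous_within_tendsto_compose' ) (auto intro!: continuous_intros)
    show "(?F \<longlongrightarrow> (1 - ln h)\<^sup>2 / 2) (at_left (1 - h))"
      using assms by (intro tendsto_eq_intros refl) auto
  qed (use assms in auto)
  then show ?thesis by (simp add: algebra_simps)
qed


lemma Lf_pos: "1 < u \<Longrightarrow> 0 < Lf u"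
  unfolding Lf_def by (simp add: field_simps)

lemma Lf_le_small: assumes "1 < u" "u \<le> 2" shows "Lf u \<le> ln (3 / (u - 1))"
proof -
  have "(u + 1) / (u - 1) \<le> 3 / (u - 1)" by (rule divide_right_mono) (use assms in auto)
  then show ?thesis unfolding Lf_def using assms by (subst ln_le_cancel_iff) (auto simp: field_simps)
qed

lemma Lf_le_big: assumes "2 \<le> u" shows "Lf u \<le> 2"
proof -
  have "Lf u \<le> ln 3" unfolding Lf_def using assms by (subst ln_le_cancel_iff) (auto simp: field_simps)
  also have "ln (3::real) \<le> 3 - 1" by (rule ln_le_minus_one) auto
  finally show ?thesis by simp
qed

lemma isCont_Lf: "1 < u \<Longrightarrow> isCont Lf u"
  unfolding Lf_def by (auto intro!: continuous_intros simp: field_simps)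

lemma Lf_measurable[measurable]: "Lf \<in> borel_measurable borel"
  unfolding Lf_def by measurable

definition Aint :: "real \<Rightarrow> real \<Rightarrow> real" where
  "Aint v u = Lf u / (u\<^sup>2 - v\<^sup>2)\<^sup>2"
definition Bint :: "real \<Rightarrow> real \<Rightarrow> real" where
  "Bint v u = Lf u * ln u / (u\<^sup>2 - v\<^sup>2)\<^sup>2"

lemma Aint_measurable[measurable]: "(\<lambda>(v,u). Aint v u) \<in> borel_measurable (lborel \<Otimes>\<^sub>M lborel)"
  unfolding Aint_def by measurable
lemma Bint_measurable[measurable]: "(\<lambda>(v,u). Bint v u) \<in> borel_measurable (lborel \<Otimes>\<^sub>M lborel)"
  unfolding Bint_def by measurable
lemma Aint_measurable'[measurable]: "Aint v \<in> borel_measurable borel"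
  unfolding Aint_def by measurable
lemma Bint_measurable'[measurable]: "Bint v \<in> borel_measurable borel"
  unfolding Bint_def by measurable

definition A :: "real \<Rightarrow> real" where "A v = (LBINT u:{1<..}. Aint v u)"
definition B :: "real \<Rightarrow> real" where "B v = (LBINT u:{1<..}. Bint v u)"

lemma si_def: fixes f :: "real \<Rightarrow> real" shows "set_integrable lborel S f \<longleftrightarrow> integrable lborel (\<lambda>x. indicator S x * f x)"
  by (simp add: set_integrable_def)
lemma sl_def: fixes f :: "real \<Rightarrow> real" shows "(LBINT x:S. f x) = integral\<^sup>L lborel (\<lambda>x. indicator S x * f x)"
  by (simp add: set_lebesgue_integral_def)

lemma int_bound_le:
  fixes f g :: "real \<Rightarrow> real"
  assumes "integrable lborel g" "f \<in> borel_measurable lborel" "AE x in lborel. \<bar>f x\<bar> \<le> g x"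
  shows "integrable lborel f \<and> integral\<^sup>L lborel f \<le> integral\<^sup>L lborel g"
proof -
  have i: "integrable lborel f"
    by (rule Bochner_Integration.integrable_bound[OF assms(1) assms(2)])
       (use assms(3) in \<open>auto elim!: eventually_mono\<close>)
  have "integral\<^sup>L lborel f \<le> integral\<^sup>L lborel g"
    by (rule integral_mono_AE[OF i assms(1)]) (use assms(3) in \<open>auto elim!: eventually_mono\<close>)
  with i show ?thesis by simp
qed

lemma int_ln3_12: "set_integrable lborel {1<..<2} (\<lambda>u::real. ln (3 / (u - 1)))
   \<and> (LBINT u:{1<..<2}. ln (3 / ((u::real) - 1))) = 1 + ln 3"
  using int_ln_sing[of 1 3 1] by (simp add: one_add_one)

lemma denom_big: fixes u v :: real assumes "2 \<le> u" "0 \<le> v" "v < 1"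
  shows "9/16 * u ^ 4 \<le> (u\<^sup>2 - v\<^sup>2)\<^sup>2"
proof -
  have "v\<^sup>2 \<le> 1" using assms by (simp add: abs_le_square_iff power_le_one)
  moreover have "2 * 2 \<le> u * u" using assms by (intro mult_mono) auto
  then have "4 \<le> u\<^sup>2" by (simp add: power2_eq_square)
  ultimately have "3/4 * u\<^sup>2 \<le> u\<^sup>2 - v\<^sup>2" by simp
  then have "(3/4 * u\<^sup>2)\<^sup>2 \<le> (u\<^sup>2 - v\<^sup>2)\<^sup>2" by (rule power_mono) simp
  then show ?thesis by (simp add: power2_eq_square power4_eq_xxxx)
qed

lemma denom_small: fixes u v :: real assumes "1 < u" "0 \<le> v" "v < 1"
  shows "(1 - v\<^sup>2)\<^sup>2 \<le> (u\<^sup>2 - v\<^sup>2)\<^sup>2" "0 < 1 - v\<^sup>2"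
proof -
  have "v\<^sup>2 < 1" using assms by (simp add: power_less_one_iff)
  moreover have "1 < u\<^sup>2" using assms by (simp add: one_less_power)
  ultimately show "(1 - v\<^sup>2)\<^sup>2 \<le> (u\<^sup>2 - v\<^sup>2)\<^sup>2" "0 < 1 - v\<^sup>2"
    by (auto intro!: power_mono)
qed

definition Maj :: "real \<Rightarrow> real \<Rightarrow> real" where
  "Maj v u = indicator {1<..<2} u * (ln (3 / (u - 1)) / (1 - v\<^sup>2)\<^sup>2) + indicator {2<..} u * (4 / u ^ 3)"

lemma Maj_integrable: "integrable lborel (Maj v)"
proof -
  have "integrable lborel (\<lambda>u::real. indicator {1<..<2} u * (ln (3 / (u - 1)) / (1 - v\<^sup>2)\<^sup>2))"
    using integrable_divide[OF int_ln3_12[unfolded si_def, THEN conjunct1], of "(1 - v\<^sup>2)\<^sup>2"]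
    by simp
  moreover have "integrable lborel (\<lambda>u::real. indicator {2<..} u * (4 / u ^ 3))"
    using int_cube_tail unfolding si_def by simp
  ultimately show ?thesis unfolding Maj_def by (rule Bochner_Integration.integrable_add)
qed

lemma Lf_ln_bound_tail: fixes u v :: real assumes "2 < u" "0 \<le> v" "v < 1"
  shows "\<bar>Aint v u\<bar> \<le> 4 / u ^ 3" "\<bar>Bint v u\<bar> \<le> 4 / u ^ 3"
proof -
  have d: "9/16 * u ^ 4 \<le> (u\<^sup>2 - v\<^sup>2)\<^sup>2" using denom_big assms by simp
  have up: "0 < 9/16 * u ^ 4" using assms by simp
  have L: "0 < Lf u" "Lf u \<le> 2" using Lf_pos Lf_le_big assms by auto
  have lu: "0 \<le> ln u" "ln u \<le> u" using assms ln_le_minus_one[of u] by auto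
  have "Lf u * ln u \<le> 2 * u" using L lu by (intro mult_mono) auto
  then have "Lf u * ln u / (u\<^sup>2 - v\<^sup>2)\<^sup>2 \<le> 2 * u / (9/16 * u ^ 4)"
    using d up L lu by (intro frac_le) auto
  also have "\<dots> \<le> 4 / u ^ 3" using assms by (simp add: field_simps power_numeral_reduce)
  finally show "\<bar>Bint v u\<bar> \<le> 4 / u ^ 3" unfolding Bint_def using L lu by simp
  have "Lf u / (u\<^sup>2 - v\<^sup>2)\<^sup>2 \<le> 2 / (9/16 * u ^ 4)"
    using d up L by (intro frac_le) auto
  also have "\<dots> \<le> 4 / u ^ 3" using assms by (simp add: field_simps power_numeral_reduce)
  finally show "\<bar>Aint v u\<bar> \<le> 4 / u ^ 3" unfolding Aint_def using L by simp
qed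

lemma Lf_ln_bound_small: fixes u v :: real assumes "1 < u" "u < 2" "0 \<le> v" "v < 1"
  shows "\<bar>Aint v u\<bar> \<le> ln (3 / (u - 1)) / (1 - v\<^sup>2)\<^sup>2" "\<bar>Bint v u\<bar> \<le> ln (3 / (u - 1)) / (1 - v\<^sup>2)\<^sup>2"
proof -
  note d = denom_small[OF assms(1,3,4)]
  have L: "0 < Lf u" "Lf u \<le> ln (3 / (u - 1))" using Lf_pos Lf_le_small assms by auto
  have lu: "0 \<le> ln u" "ln u \<le> 1" using assms ln_le_minus_one[of u] by auto
  have "Lf u * ln u \<le> ln (3 / (u - 1)) * 1" using L lu by (intro mult_mono) auto
  then have "Lf u * ln u / (u\<^sup>2 - v\<^sup>2)\<^sup>2 \<le> ln (3 / (u - 1)) / (1 - v\<^sup>2)\<^sup>2"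
    using d L lu by (intro frac_le) auto
  then show "\<bar>Bint v u\<bar> \<le> ln (3 / (u - 1)) / (1 - v\<^sup>2)\<^sup>2" unfolding Bint_def using L lu by simp
  have "Lf u / (u\<^sup>2 - v\<^sup>2)\<^sup>2 \<le> ln (3 / (u - 1)) / (1 - v\<^sup>2)\<^sup>2"
    using d L by (intro frac_le) auto
  then show "\<bar>Aint v u\<bar> \<le> ln (3 / (u - 1)) / (1 - v\<^sup>2)\<^sup>2" unfolding Aint_def using L by simp
qed

lemma AB_integrable: fixes v :: real assumes "0 \<le> v" "v < 1"
  shows "set_integrable lborel {1<..} (Aint v)" "set_integrable lborel {1<..} (Bint v)"
proof -
  have ae: "AE u in lborel. \<bar>indicator {1<..} u * Aint v u\<bar> \<le> Maj v u \<and> \<bar>indicator {1<..} u * Bint v u\<bar> \<le> Maj v u"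
    using AE_lborel_singleton[of 2]
  proof eventually_elim
    case (elim u)
    have "0 \<le> 4 / u ^ 3" if "u > 2" using that by simp
    moreover have "0 \<le> ln (3 / (u - 1)) / (1 - v\<^sup>2)\<^sup>2" if "1 < u" "u < 2"
      using that by (intro divide_nonneg_nonneg) auto
    ultimately show ?case using elim Lf_ln_bound_tail[of u v] Lf_ln_bound_small[of u v] assms
      unfolding Maj_def by (auto simp: indicator_def)
  qed
  show "set_integrable lborel {1<..} (Aint v)" unfolding si_def
  proof (rule int_bound_le[OF Maj_integrable, THEN conjunct1])
    show "(\<lambda>x. indicator {1<..} x * Aint v x) \<in> borel_measurable lborel" by measurable
    show "AE x in lborel. \<bar>indicator {1<..} x * Aint v x\<bar> \<le> Maj v x"
      using ae by eventually_elim blast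
  qed
  show "set_integrable lborel {1<..} (Bint v)" unfolding si_def
  proof (rule int_bound_le[OF Maj_integrable, THEN conjunct1])
    show "(\<lambda>x. indicator {1<..} x * Bint v x) \<in> borel_measurable lborel" by measurable
    show "AE x in lborel. \<bar>indicator {1<..} x * Bint v x\<bar> \<le> Maj v x"
      using ae by eventually_elim blast
  qed
qed


lemma Aint_nonneg: "1 < u \<Longrightarrow> 0 \<le> Aint v u"
  unfolding Aint_def using Lf_pos[of u] by simp
lemma Bint_nonneg: "1 < u \<Longrightarrow> 0 \<le> Bint v u"
  unfolding Bint_def using Lf_pos[of u] by simp

lemma denom_mono: fixes u v w :: real assumes "0 \<le> w" "w \<le> v" "v < 1" "1 < u"
  shows "0 < (u\<^sup>2 - v\<^sup>2)\<^sup>2" "(u\<^sup>2 - v\<^sup>2)\<^sup>2 \<le> (u\<^sup>2 - w\<^sup>2)\<^sup>2"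
proof -
  have "v\<^sup>2 < 1" using assms by (simp add: power_less_one_iff)
  moreover have "1 < u\<^sup>2" using assms by (simp add: one_less_power)
  moreover have "w\<^sup>2 \<le> v\<^sup>2" using assms by (intro power_mono) auto
  ultimately show "0 < (u\<^sup>2 - v\<^sup>2)\<^sup>2" "(u\<^sup>2 - v\<^sup>2)\<^sup>2 \<le> (u\<^sup>2 - w\<^sup>2)\<^sup>2"
    by (auto intro!: power_mono)
qed

lemma Aint_mono: fixes u v w :: real assumes "0 \<le> w" "w \<le> v" "v < 1" "1 < u"
  shows "Aint w u \<le> Aint v u"
  unfolding Aint_def using denom_mono[OF assms] Lf_pos[of u] assms
  by (intro divide_left_mono) auto

lemma Bint_mono: fixes u v w :: real assumes "0 \<le> w" "w \<le> v" "v < 1" "1 < u"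
  shows "Bint w u \<le> Bint v u"
  unfolding Bint_def using denom_mono[OF assms] Lf_pos[of u] assms
  by (intro divide_left_mono) auto

lemma A_nonneg: "0 \<le> A v"
  unfolding A_def sl_def by (intro integral_nonneg_AE) (auto simp: indicator_def Aint_nonneg)
lemma B_nonneg: "0 \<le> B v"
  unfolding B_def sl_def by (intro integral_nonneg_AE) (auto simp: indicator_def Bint_nonneg)

lemma A_mono: fixes v w :: real assumes "0 \<le> w" "w \<le> v" "v < 1" shows "A w \<le> A v"
  unfolding A_def using assms
  by (intro set_integral_mono AB_integrable Aint_mono) auto
lemma B_mono: fixes v w :: real assumes "0 \<le> w" "w \<le> v" "v < 1" shows "B w \<le> B v"
  unfolding B_def using assms
  by (intro set_integral_mono AB_integrable Bint_mono) auto

lemma Cint_eq: fixes u v :: real assumes "0 < v" "1 < u"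
  shows "Cint v u = ln (1 / v) * Aint v u - Bint v u"
proof -
  have e: "ellf u v = ln (1 / v) - ln u" unfolding ellf_def using assms
    by (simp add: ln_div ln_mult)
  show ?thesis unfolding Cint_def Aint_def Bint_def e by (simp add: right_diff_distrib diff_divide_distrib)
qed

lemma Cf_eq: fixes v :: real assumes "0 < v" "v < 1"
  shows "set_integrable lborel {1<..} (Cint v)" "Cf v = ln (1 / v) * A v - B v"
proof -
  have i: "set_integrable lborel {1<..} (\<lambda>u. ln (1 / v) * Aint v u - Bint v u)"
    using AB_integrable[of v] assms by auto
  show "set_integrable lborel {1<..} (Cint v)"
    by (rule set_integrable_cong[THEN iffD1, OF refl refl _ i]) (use assms Cint_eq in auto)
  have "Cf v = (LBINT u:{1<..}. ln (1 / v) * Aint v u - Bint v u)"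
    unfolding Cf_def by (rule set_lebesgue_integral_cong) (use assms Cint_eq in auto)
  also have "\<dots> = ln (1 / v) * A v - B v"
    using AB_integrable[of v] assms unfolding A_def B_def by (subst set_integral_diff) auto
  finally show "Cf v = ln (1 / v) * A v - B v" .
qed

lemma c0_eq: "c0 = A 0" and d0_eq: "d0 = - B 0"
proof -
  show "c0 = A 0" unfolding c0_def A_def Aint_def
    by (rule set_lebesgue_integral_cong) (auto simp: power2_eq_square power4_eq_xxxx)
  have "d0 = (LBINT u:{1<..}. - Bint 0 u)" unfolding d0_def Bint_def
    by (rule set_lebesgue_integral_cong) (auto simp: power2_eq_square power4_eq_xxxx ln_div)
  also have "\<dots> = - B 0" unfolding B_def using AB_integrable[of 0]
    by (simp add: set_integral_uminus)
  finally show "d0 = - B 0" .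
qed

lemma c0d0_integrable: "set_integrable lborel {1<..} (\<lambda>u. Lf u / u ^ 4)"
   "set_integrable lborel {1<..} (\<lambda>u. Lf u * ln (1 / u) / u ^ 4)"
proof -
  show "set_integrable lborel {1<..} (\<lambda>u. Lf u / u ^ 4)"
    by (rule set_integrable_cong[THEN iffD1, OF refl refl _ AB_integrable(1)[of 0]])
       (auto simp: Aint_def power2_eq_square power4_eq_xxxx)
  have "set_integrable lborel {1<..} (\<lambda>u. - Bint 0 u)" using AB_integrable(2)[of 0]
    by (simp add: set_integrable_def)
  then show "set_integrable lborel {1<..} (\<lambda>u. Lf u * ln (1 / u) / u ^ 4)"
    by (rule set_integrable_cong[THEN iffD1, OF refl refl, rotated])
       (auto simp: Bint_def power2_eq_square power4_eq_xxxx ln_div)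
qed

lemma small_denom: fixes u v :: real assumes "1 < u" "0 \<le> v" "v \<le> 1/2"
  shows "u ^ 4 \<le> (1 + 4 * v\<^sup>2) * (u\<^sup>2 - v\<^sup>2)\<^sup>2"
proof -
  define a where "a = u\<^sup>2"
  define b where "b = v\<^sup>2"
  have a1: "1 \<le> a" unfolding a_def using assms by (simp add: one_le_power)
  have b0: "0 \<le> b" unfolding b_def by simp
  have b1: "b \<le> 1/4" unfolding b_def using assms power_mono[of v "1/2" 2] by (simp add: power2_eq_square)
  have "(a - b)\<^sup>2 * (1 + 4 * b) - a\<^sup>2 = 2 * a * b * (2 * a - 1 - 4 * b) + b\<^sup>2 * (1 + 4 * b)"
    by (simp add: power2_eq_square algebra_simps)
  also have "\<dots> \<ge> 0" using a1 b0 b1 by (intro add_nonneg_nonneg mult_nonneg_nonneg) auto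
  finally have "a\<^sup>2 \<le> (1 + 4 * b) * (a - b)\<^sup>2" by (simp add: algebra_simps)
  then show ?thesis unfolding a_def b_def by (simp add: power2_eq_square power4_eq_xxxx)
qed

lemma Aint_small: fixes u v :: real assumes "1 < u" "0 \<le> v" "v \<le> 1/2"
  shows "Aint v u \<le> (1 + 4 * v\<^sup>2) * Aint 0 u"
proof -
  have v1: "v < 1" using assms by simp
  have p: "0 < (u\<^sup>2 - v\<^sup>2)\<^sup>2" using denom_mono[of 0 v u] assms v1 by auto
  have "1 / (u\<^sup>2 - v\<^sup>2)\<^sup>2 \<le> (1 + 4 * v\<^sup>2) / u ^ 4"
    using small_denom[OF assms] p assms by (simp add: field_simps)
  then have "Lf u * (1 / (u\<^sup>2 - v\<^sup>2)\<^sup>2) \<le> Lf u * ((1 + 4 * v\<^sup>2) / u ^ 4)"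
    using Lf_pos[of u] assms by (intro mult_left_mono) auto
  then show ?thesis unfolding Aint_def by (simp add: power2_eq_square power4_eq_xxxx field_simps)
qed

lemma Bint_small: fixes u v :: real assumes "1 < u" "0 \<le> v" "v \<le> 1/2"
  shows "Bint v u \<le> (1 + 4 * v\<^sup>2) * Bint 0 u"
proof -
  have v1: "v < 1" using assms by simp
  have p: "0 < (u\<^sup>2 - v\<^sup>2)\<^sup>2" using denom_mono[of 0 v u] assms v1 by auto
  have "1 / (u\<^sup>2 - v\<^sup>2)\<^sup>2 \<le> (1 + 4 * v\<^sup>2) / u ^ 4"
    using small_denom[OF assms] p assms by (simp add: field_simps)
  then have "(Lf u * ln u) * (1 / (u\<^sup>2 - v\<^sup>2)\<^sup>2) \<le> (Lf u * ln u) * ((1 + 4 * v\<^sup>2) / u ^ 4)"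
    using Lf_pos[of u] assms by (intro mult_left_mono) auto
  then show ?thesis unfolding Bint_def by (simp add: power2_eq_square power4_eq_xxxx field_simps)
qed

lemma AB_small: fixes v :: real assumes "0 \<le> v" "v \<le> 1/2"
  shows "\<bar>A v - A 0\<bar> \<le> 4 * v\<^sup>2 * A 0" "\<bar>B v - B 0\<bar> \<le> 4 * v\<^sup>2 * B 0"
proof -
  have v1: "v < 1" using assms by simp
  have "A 0 \<le> A v" using A_mono[of 0 v] assms v1 by auto
  moreover have "A v \<le> (LBINT u:{1<..}. (1 + 4 * v\<^sup>2) * Aint 0 u)"
    unfolding A_def using assms v1 AB_integrable[of 0] AB_integrable[of v]
    by (intro set_integral_mono Aint_small) auto
  moreover have "(LBINT u:{1<..}. (1 + 4 * v\<^sup>2) * Aint 0 u) = (1 + 4 * v\<^sup>2) * A 0"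
    unfolding A_def by simp
  ultimately show "\<bar>A v - A 0\<bar> \<le> 4 * v\<^sup>2 * A 0" by (simp add: algebra_simps)
  have "B 0 \<le> B v" using B_mono[of 0 v] assms v1 by auto
  moreover have "B v \<le> (LBINT u:{1<..}. (1 + 4 * v\<^sup>2) * Bint 0 u)"
    unfolding B_def using assms v1 AB_integrable[of 0] AB_integrable[of v]
    by (intro set_integral_mono Bint_small) auto
  moreover have "(LBINT u:{1<..}. (1 + 4 * v\<^sup>2) * Bint 0 u) = (1 + 4 * v\<^sup>2) * B 0"
    unfolding B_def by simp
  ultimately show "\<bar>B v - B 0\<bar> \<le> 4 * v\<^sup>2 * B 0" by (simp add: algebra_simps)
qed


lemma int_log_div:
  fixes v :: real
  assumes "0 \<le> v" "v < 1"
  shows "set_integrable lborel {1<..<2} (\<lambda>u. (ln 3 - ln (u - v) + 1) / (u - v))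
    \<and> (LBINT u:{1<..<2}. (ln 3 - ln (u - v) + 1) / (u - v))
       = ((ln 3 - ln (1 - v) + 1)\<^sup>2 - (ln 3 - ln (2 - v) + 1)\<^sup>2) / 2"
proof -
  let ?F = "\<lambda>u::real. - (ln 3 - ln (u - v) + 1)\<^sup>2 / 2"
  have "set_integrable lborel {1<..<2} (\<lambda>u. (ln 3 - ln (u - v) + 1) / (u - v))
    \<and> (LBINT u:{1<..<2}. (ln 3 - ln (u - v) + 1) / (u - v))
       = (- (ln 3 - ln (2 - v) + 1)\<^sup>2 / 2) - (- (ln 3 - ln (1 - v) + 1)\<^sup>2 / 2)"
  proof (rule FTC_Ioo[where F="?F"])
    fix x :: real assume x: "1 < x" "x < 2"
    have xv: "v < x" using x assms by simp
    show "DERIV ?F x :> (ln 3 - ln (x - v) + 1) / (x - v)"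
      apply (insert xv)
      apply (rule derivative_eq_intros DERIV_ln_eq refl | force)+
      apply (simp add: divide_simps)
      apply (simp add: algebra_simps power2_eq_square)
      done
    show "isCont (\<lambda>u. (ln 3 - ln (u - v) + 1) / (u - v)) x"
      using xv by (auto intro!: continuous_intros)
    have "ln (x - v) \<le> ln 3" using xv x assms by (subst ln_le_cancel_iff) auto
    then have "0 \<le> ln 3 - ln (x - v) + 1" by simp
    then show "0 \<le> (ln 3 - ln (x - v) + 1) / (x - v)" by (rule divide_nonneg_pos) (use xv in auto)
  next
    show "(?F \<longlongrightarrow> - (ln 3 - ln (1 - v) + 1)\<^sup>2 / 2) (at_right 1)"
      using assms by (intro tendsto_eq_intros refl) auto
    show "(?F \<longlongrightarrow> - (ln 3 - ln (2 - v) + 1)\<^sup>2 / 2) (at_left 2)"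
      using assms by (intro tendsto_eq_intros refl) auto
  qed auto
  then show ?thesis by (simp add: algebra_simps diff_divide_distrib)
qed

lemma ln3_le: "ln (3::real) \<le> 2"
proof -
  have "ln (3::real) \<le> 3 - 1" by (rule ln_le_minus_one) auto
  then show ?thesis by simp
qed

lemma AE_two: "AE x in lborel. x \<noteq> (a::real) \<and> x \<noteq> b"
  using AE_lborel_singleton[of a] AE_lborel_singleton[of b] by eventually_elim auto

definition MA :: "real \<Rightarrow> real \<Rightarrow> real" where
  "MA v u = indicator {1<..<2-v} u * (ln (3 / (u - 1)) / (1 - v)\<^sup>2)
          + indicator {2-v<..<2} u * (ln (3 / (1 - v)) * (1 / (u - v)\<^sup>2))
          + indicator {2<..} u * (4 / u ^ 3)"

lemma MA_int: fixes v :: real assumes "1/2 \<le> v" "v < 1"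
  shows "integrable lborel (MA v) \<and> integral\<^sup>L lborel (MA v)
    = (1 - v) * (1 + ln (3 / (1 - v))) / (1 - v)\<^sup>2 + ln (3 / (1 - v)) * (1 / (2 - v - v) - 1 / (2 - v)) + 1/2"
proof -
  have e: "1 + (1 - v) = 2 - v" by simp
  have I1: "set_integrable lborel {1<..<2-v} (\<lambda>u. ln (3 / (u - 1)))
    \<and> (LBINT u:{1<..<2-v}. ln (3 / (u - 1))) = (1 - v) * (1 + ln (3 / (1 - v)))"
    using int_ln_sing[of "1 - v" 3 1] assms unfolding e by simp
  have I2: "set_integrable lborel {2-v<..<2} (\<lambda>u. 1 / (u - v)\<^sup>2)
    \<and> (LBINT u:{2-v<..<2}. 1 / (u - v)\<^sup>2) = 1 / (2 - v - v) - 1 / (2 - v)"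
    using int_inv_sq[of v "2 - v" 2] assms by simp
  note I3 = int_cube_tail
  have i1: "integrable lborel (\<lambda>u. indicator {1<..<2-v} u * (ln (3 / (u - 1)) / (1 - v)\<^sup>2))"
    using integrable_divide[OF I1[unfolded si_def, THEN conjunct1], of "(1 - v)\<^sup>2"] by simp
  have i2: "integrable lborel (\<lambda>u. indicator {2-v<..<2} u * (ln (3 / (1 - v)) * (1 / (u - v)\<^sup>2)))"
    using integrable_mult_right[OF I2[unfolded si_def, THEN conjunct1], of "ln (3 / (1 - v))"]
    by (simp add: algebra_simps)
  have i3: "integrable lborel (\<lambda>u::real. indicator {2<..} u * (4 / u ^ 3))"
    using I3 unfolding si_def by simp
  have "integral\<^sup>L lborel (MA v) = integral\<^sup>L lborel (\<lambda>u. indicator {1<..<2-v} u * (ln (3 / (u - 1)) / (1 - v)\<^sup>2))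
     + integral\<^sup>L lborel (\<lambda>u. indicator {2-v<..<2} u * (ln (3 / (1 - v)) * (1 / (u - v)\<^sup>2)))
     + integral\<^sup>L lborel (\<lambda>u::real. indicator {2<..} u * (4 / u ^ 3))"
    unfolding MA_def using i1 i2 i3 by simp
  also have "integral\<^sup>L lborel (\<lambda>u. indicator {1<..<2-v} u * (ln (3 / (u - 1)) / (1 - v)\<^sup>2))
     = (1 - v) * (1 + ln (3 / (1 - v))) / (1 - v)\<^sup>2"
  proof -
    have "integral\<^sup>L lborel (\<lambda>u. indicator {1<..<2-v} u * (ln (3 / (u - 1)) / (1 - v)\<^sup>2))
      = integral\<^sup>L lborel (\<lambda>u. indicator {1<..<2-v} u * ln (3 / (u - 1))) / (1 - v)\<^sup>2"
      by (subst integral_divide_zero[symmetric]) simp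
    then show ?thesis using I1 unfolding sl_def by simp
  qed
  also have "integral\<^sup>L lborel (\<lambda>u. indicator {2-v<..<2} u * (ln (3 / (1 - v)) * (1 / (u - v)\<^sup>2)))
     = ln (3 / (1 - v)) * (1 / (2 - v - v) - 1 / (2 - v))"
  proof -
    have "(\<lambda>u. indicator {2-v<..<2} u * (ln (3 / (1 - v)) * (1 / (u - v)\<^sup>2)))
       = (\<lambda>u. ln (3 / (1 - v)) * (indicator {2-v<..<2} u * (1 / (u - v)\<^sup>2)))"
      by (auto simp: algebra_simps)
    then have "integral\<^sup>L lborel (\<lambda>u. indicator {2-v<..<2} u * (ln (3 / (1 - v)) * (1 / (u - v)\<^sup>2)))
      = ln (3 / (1 - v)) * integral\<^sup>L lborel (\<lambda>u. indicator {2-v<..<2} u * (1 / (u - v)\<^sup>2))"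
      by (simp only: integral_mult_right_zero)
    then show ?thesis using I2 unfolding sl_def by simp
  qed
  also have "integral\<^sup>L lborel (\<lambda>u::real. indicator {2<..} u * (4 / u ^ 3)) = 1/2"
    using I3 unfolding sl_def by simp
  finally show ?thesis using i1 i2 i3 unfolding MA_def by simp
qed


lemma MA_nonneg: fixes v u :: real assumes "1/2 \<le> v" "v < 1" shows "0 \<le> MA v u"
proof -
  have a: "0 \<le> ln (3 / (u - 1)) / (1 - v)\<^sup>2" if "1 < u" "u < 2 - v"
  proof -
    have "1 \<le> 3 / (u - 1)" using that assms by (simp add: field_simps)
    then show ?thesis by (intro divide_nonneg_nonneg) auto
  qed
  have b: "0 \<le> ln (3 / (1 - v))" using assms by (simp add: field_simps)
  have c: "0 \<le> 4 / u ^ 3" if "2 < u" using that by simp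
  show ?thesis unfolding MA_def using a b c
    by (auto simp: indicator_def intro!: add_nonneg_nonneg mult_nonneg_nonneg)
qed

lemma sq_ge_diff: fixes u v :: real assumes "v < u" "1 \<le> u + v"
  shows "(u - v)\<^sup>2 \<le> (u\<^sup>2 - v\<^sup>2)\<^sup>2"
proof -
  have "u - v \<le> (u - v) * (u + v)" using assms by (simp add: mult_le_cancel_left1)
  also have "\<dots> = u\<^sup>2 - v\<^sup>2" by (simp add: power2_eq_square algebra_simps)
  finally show ?thesis using assms by (intro power_mono) auto
qed

lemma Aint_le_MA: fixes v u :: real assumes "1/2 \<le> v" "v < 1" "u \<noteq> 2 - v" "u \<noteq> 2"
  shows "indicator {1<..} u * Aint v u \<le> MA v u"
proof -
  consider "u \<le> 1" | "1 < u" "u < 2 - v" | "2 - v < u" "u < 2" | "2 < u" using assms by linarith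
  then show ?thesis
  proof cases
    case 1 then show ?thesis using MA_nonneg[OF assms(1,2)] by simp
  next
    case 2
    have d1: "(u - v)\<^sup>2 \<le> (u\<^sup>2 - v\<^sup>2)\<^sup>2" using 2 assms by (intro sq_ge_diff) auto
    have d2: "(1 - v)\<^sup>2 \<le> (u - v)\<^sup>2" using 2 assms by (intro power_mono) auto
    have L: "0 < Lf u" "Lf u \<le> ln (3 / (u - 1))" using Lf_pos Lf_le_small 2 assms by auto
    have "Lf u / (u\<^sup>2 - v\<^sup>2)\<^sup>2 \<le> ln (3 / (u - 1)) / (1 - v)\<^sup>2"
      using L d1 d2 assms by (intro frac_le) auto
    then show ?thesis using 2 assms unfolding MA_def Aint_def by (simp add: indicator_def)
  next
    case 3
    have d1: "(u - v)\<^sup>2 \<le> (u\<^sup>2 - v\<^sup>2)\<^sup>2" using 3 assms by (intro sq_ge_diff) auto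
    have L: "0 < Lf u" "Lf u \<le> ln (3 / (u - 1))" using Lf_pos Lf_le_small 3 assms by auto
    have "ln (3 / (u - 1)) \<le> ln (3 / (1 - v))" using 3 assms
      by (subst ln_le_cancel_iff) (auto intro!: divide_left_mono)
    then have l: "Lf u \<le> ln (3 / (1 - v))" using L(2) by linarith
    have "Lf u / (u\<^sup>2 - v\<^sup>2)\<^sup>2 \<le> ln (3 / (1 - v)) / (u - v)\<^sup>2"
      using L(1) l d1 3 assms by (intro frac_le) auto
    then show ?thesis using 3 assms unfolding MA_def Aint_def by (simp add: indicator_def)
  next
    case 4
    then show ?thesis using Lf_ln_bound_tail(1)[of u v] assms unfolding MA_def by (simp add: indicator_def)
  qed
qed

lemma A_near1: fixes v :: real assumes "1/2 \<le> v" "v < 1"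
  shows "A v \<le> 5 * (1 - ln (1 - v)) / (1 - v)"
proof -
  note M = MA_int[OF assms]
  have "A v \<le> integral\<^sup>L lborel (MA v)"
    unfolding A_def sl_def
  proof (rule integral_mono_AE)
    show "integrable lborel (\<lambda>x. indicator {1<..} x * Aint v x)"
      using AB_integrable(1)[of v] assms unfolding si_def by simp
    show "integrable lborel (MA v)" using M by simp
    show "AE x in lborel. indicator {1<..} x * Aint v x \<le> MA v x"
      using AE_two[of "2 - v" 2] by eventually_elim (use Aint_le_MA assms in auto)
  qed
  also have "\<dots> = (1 - v) * (1 + ln (3 / (1 - v))) / (1 - v)\<^sup>2 + ln (3 / (1 - v)) * (1 / (2 - v - v) - 1 / (2 - v)) + 1/2"
    using M by simp
  also have "\<dots> \<le> 5 * (1 - ln (1 - v)) / (1 - v)"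
  proof -
    define e where "e = 1 - v"
    have e0: "0 < e" "e \<le> 1/2" using assms unfolding e_def by auto
    define L where "L = - ln e"
    have L0: "0 \<le> L" unfolding L_def using e0 by simp
    have l3: "ln (3 / e) = ln 3 + L" unfolding L_def using e0 by (simp add: ln_div)
    have l3': "ln (3 / e) \<le> 2 + L" using l3 ln3_le by simp
    have l3p: "0 \<le> ln (3 / e)" using e0 by (simp add: field_simps)
    have t1: "e * (1 + ln (3 / e)) / e\<^sup>2 \<le> (3 + L) / e"
      using e0 l3' by (simp add: power2_eq_square divide_right_mono)
    have "2 - v - v = 2 * e" unfolding e_def by simp
    moreover have "0 \<le> 1 / (2 - v)" using assms by simp
    ultimately have "1 / (2 - v - v) - 1 / (2 - v) \<le> 1 / (2 * e)" by simp
    note t2a = this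
    have t2b: "0 \<le> 1 / (2 - v - v) - 1 / (2 - v)"
    proof -
      have "1 / (2 - v) \<le> 1 / (2 - v - v)" by (rule frac_le) (use assms in auto)
      then show ?thesis by simp
    qed
    have t2c: "0 \<le> 2 + L" using L0 by simp
    have t2: "ln (3 / e) * (1 / (2 - v - v) - 1 / (2 - v)) \<le> (2 + L) * (1 / (2 * e))"
      by (rule mult_mono[OF l3' t2a t2c t2b])
    have t3: "1/2 \<le> 1 / (4 * e)" using e0 by (simp add: field_simps)
    have "e * (1 + ln (3 / e)) / e\<^sup>2 + ln (3 / e) * (1 / (2 - v - v) - 1 / (2 - v)) + 1/2
        \<le> (3 + L) / e + (2 + L) * (1 / (2 * e)) + 1 / (4 * e)" using t1 t2 t3 by linarith
    also have "\<dots> = (4.25 + 1.5 * L) / e" using e0 by (simp add: field_simps)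
    also have "\<dots> \<le> 5 * (1 + L) / e" using e0 L0 by (intro divide_right_mono) auto
    finally show ?thesis unfolding e_def L_def by simp
  qed
  finally show ?thesis .
qed

definition MB :: "real \<Rightarrow> real \<Rightarrow> real" where
  "MB v u = indicator {1<..<2} u * ((ln 3 - ln (u - v) + 1) / (u - v)) + indicator {2<..} u * (4 / u ^ 3)"

lemma slog_le: fixes s :: real assumes "0 < s" "s \<le> 1" shows "- s * ln s \<le> 1"
proof -
  have "ln (1 / s) \<le> 1 / s - 1" by (rule ln_le_minus_one) (use assms in auto)
  then have "- ln s \<le> 1 / s - 1" using assms by (simp add: ln_div)
  then have "s * (- ln s) \<le> s * (1 / s - 1)" using assms by (intro mult_left_mono) auto
  moreover have "s * (1 / s - 1) = 1 - s" using assms by (simp add: field_simps)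
  ultimately show ?thesis using assms by simp
qed

lemma Bint_key: fixes t w :: real assumes "0 < t" "t < w" "w < 3"
  shows "(ln 3 - ln t) * t / w \<le> ln 3 - ln w + 1"
proof -
  define s where "s = t / w"
  have s: "0 < s" "s \<le> 1" unfolding s_def using assms by auto
  have lt: "ln t = ln s + ln w" unfolding s_def using assms by (simp add: ln_div)
  have "(ln 3 - ln t) * t / w = s * (ln 3 - ln w) + (- s * ln s)" unfolding s_def lt s_def
    using assms by (simp add: field_simps)
  also have "\<dots> \<le> 1 * (ln 3 - ln w) + 1"
  proof -
    have "0 \<le> ln 3 - ln w" using assms by simp
    then have "s * (ln 3 - ln w) \<le> 1 * (ln 3 - ln w)" using s by (intro mult_right_mono) auto
    then show ?thesis using slog_le[OF s] by linarith
  qed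
  finally show ?thesis by simp
qed

lemma Bint_le_MB: fixes v u :: real assumes "1/2 \<le> v" "v < 1" "u \<noteq> 2"
  shows "indicator {1<..} u * Bint v u \<le> MB v u"
proof -
  have MBnn: "0 \<le> MB v u"
  proof -
    have "0 \<le> (ln 3 - ln (u - v) + 1) / (u - v)" if "1 < u" "u < 2"
    proof -
      have "ln (u - v) \<le> ln 3" using that assms by (subst ln_le_cancel_iff) auto
      then show ?thesis using that assms by (intro divide_nonneg_pos) auto
    qed
    moreover have "0 \<le> 4 / u ^ 3" if "2 < u" using that by simp
    ultimately show ?thesis unfolding MB_def by (auto simp: indicator_def)
  qed
  consider "u \<le> 1" | "1 < u" "u < 2" | "2 < u" using assms by linarith
  then show ?thesis
  proof cases
    case 1 then show ?thesis using MBnn by simp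
  next
    case 2
    define t where "t = u - 1"
    define w where "w = u - v"
    have tw: "0 < t" "t < w" "w < 3" "0 < w" unfolding t_def w_def using 2 assms by auto
    have d1: "w\<^sup>2 \<le> (u\<^sup>2 - v\<^sup>2)\<^sup>2" unfolding w_def using 2 assms by (intro sq_ge_diff) auto
    have L: "0 < Lf u" "Lf u \<le> ln 3 - ln t" using Lf_pos Lf_le_small 2 assms tw unfolding t_def
      by (auto simp: ln_div)
    have lu: "0 \<le> ln u" "ln u \<le> t" unfolding t_def using 2 ln_le_minus_one[of u] by auto
    have "Lf u * ln u \<le> (ln 3 - ln t) * t" using L lu by (intro mult_mono) auto
    then have "Bint v u \<le> (ln 3 - ln t) * t / w\<^sup>2"
      unfolding Bint_def using d1 tw L lu by (intro frac_le) auto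
    also have "\<dots> = ((ln 3 - ln t) * t / w) / w" by (simp add: power2_eq_square)
    also have "\<dots> \<le> (ln 3 - ln w + 1) / w"
      using Bint_key[OF tw(1-3)] tw by (intro divide_right_mono) auto
    finally show ?thesis using 2 unfolding MB_def w_def by (simp add: indicator_def)
  next
    case 3
    then show ?thesis using Lf_ln_bound_tail(2)[of u v] assms unfolding MB_def by (simp add: indicator_def)
  qed
qed

lemma aux_lin: fixes a b c e :: real assumes "a \<le> c" "c + 1 \<le> 10 * e" "0 \<le> b"
  shows "(a - b) / 2 + 1/2 \<le> 5 * e" using assms by (simp add: field_simps)

lemma B_near1: fixes v :: real assumes "1/2 \<le> v" "v < 1"
  shows "B v \<le> 5 * (1 - ln (1 - v))\<^sup>2"
proof -
  have v0: "0 \<le> v" using assms by simp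
  note I = int_log_div[OF v0 assms(2)]
  have i1: "integrable lborel (\<lambda>u. indicator {1<..<2} u * ((ln 3 - ln (u - v) + 1) / (u - v)))"
    using I[THEN conjunct1] unfolding si_def .
  have i2: "integrable lborel (\<lambda>u::real. indicator {2<..} u * (4 / u ^ 3))"
    using int_cube_tail unfolding si_def by simp
  have MBe: "MB v = (\<lambda>u. indicator {1<..<2} u * ((ln 3 - ln (u - v) + 1) / (u - v)) + indicator {2<..} u * (4 / u ^ 3))"
    by (rule ext) (simp only: MB_def)
  have MBi: "integrable lborel (MB v)" unfolding MBe by (rule Bochner_Integration.integrable_add[OF i1 i2])
  have "B v \<le> integral\<^sup>L lborel (MB v)"
    unfolding B_def sl_def
  proof (rule integral_mono_AE)
    show "integrable lborel (\<lambda>x. indicator {1<..} x * Bint v x)"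
      using AB_integrable(2)[of v] assms unfolding si_def by simp
    show "integrable lborel (MB v)" using MBi .
    show "AE x in lborel. indicator {1<..} x * Bint v x \<le> MB v x"
      using AE_lborel_singleton[of 2] by eventually_elim (use Bint_le_MB assms in auto)
  qed
  also have "integral\<^sup>L lborel (MB v) = ((ln 3 - ln (1 - v) + 1)\<^sup>2 - (ln 3 - ln (2 - v) + 1)\<^sup>2) / 2 + 1/2"
  proof -
    have "integral\<^sup>L lborel (MB v) = integral\<^sup>L lborel (\<lambda>u. indicator {1<..<2} u * ((ln 3 - ln (u - v) + 1) / (u - v)))
       + integral\<^sup>L lborel (\<lambda>u::real. indicator {2<..} u * (4 / u ^ 3))"
    proof -
      have "MB v = (\<lambda>u. indicator {1<..<2} u * ((ln 3 - ln (u - v) + 1) / (u - v)) + indicator {2<..} u * (4 / u ^ 3))"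
        by (rule ext) (simp only: MB_def)
      then show ?thesis by (simp only: Bochner_Integration.integral_add[OF i1 i2])
    qed
    also have "integral\<^sup>L lborel (\<lambda>u. indicator {1<..<2} u * ((ln 3 - ln (u - v) + 1) / (u - v)))
       = ((ln 3 - ln (1 - v) + 1)\<^sup>2 - (ln 3 - ln (2 - v) + 1)\<^sup>2) / 2"
      using I[THEN conjunct2] unfolding sl_def .
    also have "integral\<^sup>L lborel (\<lambda>u::real. indicator {2<..} u * (4 / u ^ 3)) = 1/2"
      using int_cube_tail unfolding sl_def by simp
    finally show ?thesis .
  qed
  also have "\<dots> \<le> 5 * (1 - ln (1 - v))\<^sup>2"
  proof -
    define L where "L = - ln (1 - v)"
    have L0: "0 \<le> L" unfolding L_def using assms by simp
    have a: "0 \<le> ln 3 - ln (1 - v) + 1" using assms by simp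
    have "(ln 3 - ln (1 - v) + 1)\<^sup>2 \<le> (3 + L)\<^sup>2"
      using a ln3_le unfolding L_def by (intro power_mono) auto
    moreover have "(3 + L)\<^sup>2 + 1 \<le> 10 * (1 + L)\<^sup>2" using L0 by (simp add: power2_eq_square algebra_simps)
    moreover have "0 \<le> (ln 3 - ln (2 - v) + 1)\<^sup>2" by simp
    moreover note aux_lin
    ultimately have "((ln 3 - ln (1 - v) + 1)\<^sup>2 - (ln 3 - ln (2 - v) + 1)\<^sup>2) / 2 + 1/2 \<le> 5 * (1 + L)\<^sup>2"
      by blast
    then show ?thesis unfolding L_def by simp
  qed
  finally show ?thesis .
qed

lemma ln_inv_le: fixes v :: real assumes "1/2 \<le> v" "v \<le> 1" shows "ln (1 / v) \<le> 2 * (1 - v)"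
proof -
  have "ln (1 / v) \<le> 1 / v - 1" by (rule ln_le_minus_one) (use assms in auto)
  also have "\<dots> = (1 - v) / v" using assms by (simp add: field_simps)
  also have "\<dots> \<le> (1 - v) / (1/2)" using assms by (intro divide_left_mono) auto
  finally show ?thesis by simp
qed

lemma g_near1: fixes v :: real assumes "1/2 \<le> v" "v < 1"
  shows "ln (1 / v) * A v + B v \<le> 15 * (1 - ln (1 - v))\<^sup>2"
proof -
  define L where "L = 1 - ln (1 - v)"
  have L1: "1 \<le> L" unfolding L_def using assms by simp
  have "ln (1 / v) * A v \<le> (2 * (1 - v)) * (5 * L / (1 - v))"
    using ln_inv_le[of v] A_near1[OF assms] A_nonneg[of v] assms unfolding L_def
    by (intro mult_mono) auto
  also have "\<dots> = 10 * L" using assms by (simp add: field_simps)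
  also have "\<dots> \<le> 10 * L\<^sup>2" using L1 by (simp add: power2_eq_square)
  finally show ?thesis using B_near1[OF assms] unfolding L_def by simp
qed


lemma A_measurable[measurable]: "A \<in> borel_measurable lborel"
  unfolding A_def[abs_def] set_lebesgue_integral_def by measurable
lemma B_measurable[measurable]: "B \<in> borel_measurable lborel"
  unfolding B_def[abs_def] set_lebesgue_integral_def by measurable

definition g :: "real \<Rightarrow> real" where "g v = ln (1 / v) * A v + B v"

lemma g_measurable[measurable]: "g \<in> borel_measurable lborel"
  unfolding g_def[abs_def] by measurable

lemma g_nonneg: fixes v :: real assumes "0 < v" "v < 1" shows "0 \<le> g v"
  unfolding g_def using assms A_nonneg[of v] B_nonneg[of v] by simp

lemma Cf_le_g: fixes v :: real assumes "0 < v" "v < 1" shows "\<bar>Cf v\<bar> \<le> g v"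
proof -
  have "0 \<le> ln (1 / v)" using assms by (simp add: field_simps)
  then have "0 \<le> ln (1 / v) * A v" using A_nonneg[of v] by simp
  then show ?thesis using Cf_eq(2)[OF assms] B_nonneg[of v] unfolding g_def by simp
qed

lemma g_small: fixes v :: real assumes "0 < v" "v < 1/2"
  shows "g v \<le> (A (1/2) + B (1/2) / ln 2) * ln (1 / v)"
proof -
  have l2: "ln 2 \<le> ln (1 / v)" using assms by (subst ln_le_cancel_iff) (auto simp: field_simps)
  have l0: "0 < ln (2::real)" by simp
  have "A v \<le> A (1/2)" using A_mono[of v "1/2"] assms by simp
  moreover have "0 \<le> ln (1 / v)" using l2 l0 by linarith
  ultimately have a: "ln (1 / v) * A v \<le> ln (1 / v) * A (1/2)" by (intro mult_left_mono)
  have "B v \<le> B (1/2)" using B_mono[of v "1/2"] assms by simp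
  also have "B (1/2) = B (1/2) / ln 2 * ln 2" using l0 by simp
  also have "\<dots> \<le> B (1/2) / ln 2 * ln (1 / v)" using l2 l0 B_nonneg[of "1/2"] by (intro mult_left_mono) auto
  finally show ?thesis using a unfolding g_def by (simp add: algebra_simps)
qed

lemma integrable_eqI: "integrable M f \<Longrightarrow> (\<And>x. f x = g x) \<Longrightarrow> integrable M g"
  by (metis ext)

definition Gm :: "real \<Rightarrow> real" where
  "Gm v = (A (1/2) + B (1/2) / ln 2) * (indicator {0<..<1/2} v * ln (1 / v))
        + 15 * (indicator {1/2<..<1} v * (1 - ln (1 - v))\<^sup>2)"

lemma Gm_integrable: "integrable lborel Gm"
proof -
  have "set_integrable lborel {0<..<1/2} (\<lambda>v::real. ln (1 / (v - 0)))"
    using int_ln_sing[of "1/2" 1 0] by simp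
  then have i0: "integrable lborel (\<lambda>v::real. indicator {0<..<1/2} v * ln (1 / v))"
    unfolding si_def by simp
  have i1: "integrable lborel (\<lambda>v. (A (1/2) + B (1/2) / ln 2) * (indicator {0<..<1/2} v * ln (1 / v)))"
    using i0 by simp
  have "set_integrable lborel {1/2<..<1} (\<lambda>v::real. (1 - ln (1 - v))\<^sup>2)"
  proof -
    have "(1::real) - 1/2 = 1/2" by simp
    then show ?thesis using int_logsq_end[of "1/2"] by simp
  qed
  then have i0': "integrable lborel (\<lambda>v::real. indicator {1/2<..<1} v * (1 - ln (1 - v))\<^sup>2)"
    unfolding si_def by simp
  have i2: "integrable lborel (\<lambda>v::real. 15 * (indicator {1/2<..<1} v * (1 - ln (1 - v))\<^sup>2))"
    using i0' by simp
  have "Gm = (\<lambda>v. (A (1/2) + B (1/2) / ln 2) * (indicator {0<..<1/2} v * ln (1 / v))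
        + 15 * (indicator {1/2<..<1} v * (1 - ln (1 - v))\<^sup>2))" by (rule ext) (simp only: Gm_def)
  then show ?thesis using Bochner_Integration.integrable_add[OF i1 i2] by simp
qed

lemma g_le_Gm: fixes v :: real assumes "v \<noteq> 1/2" shows "indicator {0<..<1} v * g v \<le> Gm v"
proof -
  have ln0: "0 \<le> ln (1 / v)" if "0 < v" "v < 1" using that by (simp add: field_simps)
  have c0: "0 \<le> A (1/2) + B (1/2) / ln 2" using A_nonneg B_nonneg by simp
  consider "v \<le> 0 \<or> 1 \<le> v" | "0 < v" "v < 1/2" | "1/2 < v" "v < 1" using assms by linarith
  then show ?thesis
  proof cases
    case 1
    then show ?thesis unfolding Gm_def using ln0 c0 by (auto simp: indicator_def)
  next
    case 2
    then show ?thesis using g_small[OF 2] unfolding Gm_def by (simp add: indicator_def)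
  next
    case 3
    then show ?thesis using g_near1[of v] unfolding Gm_def g_def[symmetric] by (simp add: indicator_def)
  qed
qed

lemma g_integrable: "set_integrable lborel {0<..<1} g"
  unfolding si_def
proof (rule int_bound_le[OF Gm_integrable, THEN conjunct1])
  show "(\<lambda>x. indicator {0<..<1} x * g x) \<in> borel_measurable lborel" by measurable
  show "AE x in lborel. \<bar>indicator {0<..<1} x * g x\<bar> \<le> Gm x"
    using AE_lborel_singleton[of "1/2"]
  proof eventually_elim
    case (elim x)
    have "0 \<le> indicator {0<..<1} x * g x" using g_nonneg[of x] by (auto simp: indicator_def)
    then show ?case using g_le_Gm[OF elim] by simp
  qed
qed

lemma Cf_integrable: "set_integrable lborel {0<..<1} Cf" "set_integrable lborel {0<..<1} (\<lambda>v. v * Cf v)"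
proof -
  have m: "(\<lambda>v. ln (1 / v) * A v - B v) \<in> borel_measurable lborel" by measurable
  have "set_integrable lborel {0<..<1} (\<lambda>v. ln (1 / v) * A v - B v)"
    using g_integrable
  proof (rule set_integrable_bound)
    show "set_borel_measurable lborel {0<..<1} (\<lambda>v. ln (1 / v) * A v - B v)"
      unfolding set_borel_measurable_def using m by measurable
    show "AE x in lborel. x \<in> {0<..<1} \<longrightarrow> norm (ln (1 / x) * A x - B x) \<le> norm (g x)"
      using Cf_le_g Cf_eq(2) g_nonneg by (auto intro!: AE_I2)
  qed
  then show c: "set_integrable lborel {0<..<1} Cf"
    by (rule set_integrable_cong[THEN iffD1, rotated 3]) (auto simp: Cf_eq(2))
  have "set_integrable lborel {0<..<1} (\<lambda>v. v * (ln (1 / v) * A v - B v))"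
    using g_integrable
  proof (rule set_integrable_bound)
    show "set_borel_measurable lborel {0<..<1} (\<lambda>v. v * (ln (1 / v) * A v - B v))"
      unfolding set_borel_measurable_def using m by measurable
    show "AE x in lborel. x \<in> {0<..<1} \<longrightarrow> norm (x * (ln (1 / x) * A x - B x)) \<le> norm (g x)"
    proof (intro AE_I2 impI)
      fix x :: real assume x: "x \<in> {0<..<1}"
      have "\<bar>x * (ln (1 / x) * A x - B x)\<bar> = \<bar>x\<bar> * \<bar>Cf x\<bar>" using Cf_eq(2)[of x] x by (simp add: abs_mult)
      also have "\<dots> \<le> 1 * g x" using Cf_le_g[of x] x by (intro mult_mono) auto
      finally show "norm (x * (ln (1 / x) * A x - B x)) \<le> norm (g x)" using g_nonneg[of x] x by simp
    qed
  qed
  then show "set_integrable lborel {0<..<1} (\<lambda>v. v * Cf v)"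
    by (rule set_integrable_cong[THEN iffD1, rotated 3]) (auto simp: Cf_eq(2))
qed

lemma part_i: "(\<lambda>v. Cf v - c0 * ln (1 / v) - d0) \<in> O[at_right 0](\<lambda>v. v\<^sup>2 * ln (1 / v))"
proof (rule bigoI)
  have ev: "eventually (\<lambda>v::real. 0 < v \<and> v < 1/2) (at_right 0)"
    using eventually_at_right_real[of 0 "1/2::real"] by (auto elim: eventually_mono)
  show "eventually (\<lambda>v. norm (Cf v - c0 * ln (1 / v) - d0) \<le> (4 * (A 0 + B 0 / ln 2)) * norm (v\<^sup>2 * ln (1 / v))) (at_right 0)"
    using ev
  proof eventually_elim
    case (elim v)
    have v1: "v < 1" "0 \<le> v" "v \<le> 1/2" using elim by auto
    have l2: "ln 2 \<le> ln (1 / v)" using elim by (subst ln_le_cancel_iff) (auto simp: field_simps)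
    have l0: "0 < ln (2::real)" by simp
    have e: "Cf v - c0 * ln (1 / v) - d0 = ln (1 / v) * (A v - A 0) - (B v - B 0)"
      using Cf_eq(2)[of v] elim c0_eq d0_eq by (simp add: algebra_simps)
    have "\<bar>ln (1 / v) * (A v - A 0) - (B v - B 0)\<bar> \<le> ln (1 / v) * \<bar>A v - A 0\<bar> + \<bar>B v - B 0\<bar>"
    proof -
      have "0 \<le> ln (1 / v)" using l2 l0 by linarith
      then have "\<bar>ln (1 / v) * (A v - A 0)\<bar> = ln (1 / v) * \<bar>A v - A 0\<bar>" by (simp add: abs_mult)
      then show ?thesis using abs_triangle_ineq4[of "ln (1 / v) * (A v - A 0)" "B v - B 0"] by simp
    qed
    also have "\<dots> \<le> ln (1 / v) * (4 * v\<^sup>2 * A 0) + 4 * v\<^sup>2 * B 0"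
    proof -
      have lv: "0 \<le> ln (1 / v)" using l2 l0 by linarith
      show ?thesis using AB_small[OF v1(2,3)] lv by (intro add_mono mult_left_mono) auto
    qed
    also have "4 * v\<^sup>2 * B 0 \<le> 4 * v\<^sup>2 * (B 0 / ln 2 * ln (1 / v))"
    proof -
      have "B 0 = B 0 / ln 2 * ln 2" using l0 by simp
      also have "\<dots> \<le> B 0 / ln 2 * ln (1 / v)" using l2 l0 B_nonneg[of 0] by (intro mult_left_mono) auto
      finally show ?thesis by (intro mult_left_mono) auto
    qed
    finally have "\<bar>Cf v - c0 * ln (1 / v) - d0\<bar> \<le> 4 * (A 0 + B 0 / ln 2) * (v\<^sup>2 * ln (1 / v))"
      unfolding e by (simp add: algebra_simps)
    moreover have "0 \<le> ln (1 / v)" using l2 l0 by linarith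
    ultimately show ?case by (simp add: abs_mult)
  qed
qed


lemma shift_int:
  fixes F :: "real \<Rightarrow> real"
  assumes "integrable lborel F"
  shows "integrable lborel (\<lambda>v. F (v + h))" "integral\<^sup>L lborel (\<lambda>v. F (v + h)) = integral\<^sup>L lborel F"
proof -
  have "integrable lborel (\<lambda>x. F (h + 1 * x))"
    by (rule lborel_integrable_real_affine[OF assms]) simp
  then show "integrable lborel (\<lambda>v. F (v + h))" by (simp add: add.commute)
  have "integral\<^sup>L lborel F = \<bar>1\<bar> *\<^sub>R integral\<^sup>L lborel (\<lambda>x. F (h + 1 * x))"
    by (rule lborel_integral_real_affine) simp
  then show "integral\<^sup>L lborel (\<lambda>v. F (v + h)) = integral\<^sup>L lborel F" by (simp add: add.commute)
qed

lemma fourier_bound: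
  fixes F \<phi> :: "real \<Rightarrow> real" and y :: real
  assumes F: "integrable lborel F" and y: "0 < y"
    and \<phi>m: "\<phi> \<in> borel_measurable borel"
    and \<phi>1: "\<And>x. \<bar>\<phi> x\<bar> \<le> 1" and \<phi>p: "\<And>x. \<phi> (x + pi) = - \<phi> x"
  shows "\<bar>integral\<^sup>L lborel (\<lambda>v. F v * \<phi> (v * y))\<bar> \<le> 1/2 * integral\<^sup>L lborel (\<lambda>v. \<bar>F (v + pi / y) - F v\<bar>)"
proof -
  define h where "h = pi / y"
  have Fm[measurable]: "F \<in> borel_measurable lborel" using F by (rule borel_measurable_integrable)
  have \<phi>m'[measurable]: "\<phi> \<in> borel_measurable lborel" using \<phi>m by simp
  have Fh: "integrable lborel (\<lambda>v. F (v + h))" using shift_int[OF F] by simp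
  have iF: "integrable lborel (\<lambda>v. F v * \<phi> (v * y))"
    by (rule Bochner_Integration.integrable_bound[OF integrable_abs[OF F]])
       (auto simp: abs_mult intro!: mult_left_le[OF \<phi>1] )
  have ish: "integral\<^sup>L lborel (\<lambda>v. F v * \<phi> (v * y)) = integral\<^sup>L lborel (\<lambda>v. F (v + h) * \<phi> ((v + h) * y))"
    using shift_int(2)[OF iF, of h] by simp
  have hy: "\<And>v. (v + h) * y = v * y + pi" unfolding h_def using y by (simp add: field_simps)
  have "integral\<^sup>L lborel (\<lambda>v. F v * \<phi> (v * y)) = - integral\<^sup>L lborel (\<lambda>v. F (v + h) * \<phi> (v * y))"
    unfolding ish hy \<phi>p by simp
  then have "2 * integral\<^sup>L lborel (\<lambda>v. F v * \<phi> (v * y))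
      = integral\<^sup>L lborel (\<lambda>v. F v * \<phi> (v * y)) - integral\<^sup>L lborel (\<lambda>v. F (v + h) * \<phi> (v * y))" by simp
  also have "\<dots> = integral\<^sup>L lborel (\<lambda>v. (F v - F (v + h)) * \<phi> (v * y))"
  proof -
    have iFh: "integrable lborel (\<lambda>v. F (v + h) * \<phi> (v * y))"
      by (rule Bochner_Integration.integrable_bound[OF integrable_abs[OF Fh]])
         (auto simp: abs_mult intro!: mult_left_le[OF \<phi>1])
    show ?thesis using Bochner_Integration.integral_diff[OF iF iFh] by (simp add: left_diff_distrib)
  qed
  also have "\<bar>\<dots>\<bar> \<le> integral\<^sup>L lborel (\<lambda>v. \<bar>F (v + h) - F v\<bar>)"
  proof (rule integral_abs_bound_integral)
    show "integrable lborel (\<lambda>v. (F v - F (v + h)) * \<phi> (v * y))"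
      by (rule Bochner_Integration.integrable_bound[OF integrable_abs[OF Bochner_Integration.integrable_diff[OF F Fh]]])
         (auto simp: abs_mult intro!: mult_left_le[OF \<phi>1])
    show "integrable lborel (\<lambda>v. \<bar>F (v + h) - F v\<bar>)"
      using Bochner_Integration.integrable_diff[OF Fh F] by (rule integrable_abs)
    fix v :: real
    have "\<bar>(F v - F (v + h)) * \<phi> (v * y)\<bar> \<le> \<bar>F v - F (v + h)\<bar> * 1"
      unfolding abs_mult by (intro mult_left_mono \<phi>1) auto
    then show "\<bar>(F v - F (v + h)) * \<phi> (v * y)\<bar> \<le> \<bar>F (v + h) - F v\<bar>" by simp
  qed
  finally show ?thesis unfolding h_def by simp
qed

lemma modulus_bound:
  fixes f g e :: "real \<Rightarrow> real" and h :: real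
  assumes h: "0 < h" "h < 1"
    and fm[measurable]: "f \<in> borel_measurable lborel"
    and gi: "set_integrable lborel {0<..<1} g"
    and ei: "set_integrable lborel {0<..<1-h} e"
    and fg: "\<And>v. 0 < v \<Longrightarrow> v < 1 \<Longrightarrow> \<bar>f v\<bar> \<le> g v"
    and fd: "\<And>v. 0 < v \<Longrightarrow> v < 1 - h \<Longrightarrow> \<bar>f (v + h) - f v\<bar> \<le> g (v + h) - g v + e v"
  shows "integral\<^sup>L lborel (\<lambda>v. \<bar>indicator {0<..<1} (v + h) * f (v + h) - indicator {0<..<1} v * f v\<bar>)
     \<le> 2 * (LBINT v:{1-h<..<1}. g v) + (LBINT v:{0<..<1-h}. e v)"
proof -
  define G where "G v = indicator {0<..<1} v * g v" for v
  have Gi: "integrable lborel G" using gi unfolding si_def G_def[abs_def] .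
  have Ghi: "integrable lborel (\<lambda>v. G (v + h))" using shift_int[OF Gi] by simp
  have g2i: "integrable lborel (\<lambda>v. indicator {1-h<..<1} v * g v)"
  proof -
    have "{1-h<..<1} \<subseteq> {0<..<1::real}" using h by auto
    then show ?thesis using set_integrable_subset[OF gi, of "{1-h<..<1}"] unfolding si_def by auto
  qed
  have ei': "integrable lborel (\<lambda>v. indicator {0<..<1-h} v * e v)" using ei unfolding si_def .
  define R where "R v = (G (v + h) - G v) + 2 * (indicator {1-h<..<1} v * g v) + indicator {0<..<1-h} v * e v" for v
  have Ri: "integrable lborel R" unfolding R_def[abs_def]
    using Ghi Gi g2i ei' by (intro Bochner_Integration.integrable_add Bochner_Integration.integrable_diff integrable_mult_right) auto
  have "integral\<^sup>L lborel (\<lambda>v. \<bar>indicator {0<..<1} (v + h) * f (v + h) - indicator {0<..<1} v * f v\<bar>)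
      \<le> integral\<^sup>L lborel R"
  proof (rule integral_mono_AE')
    show "integrable lborel R" by (rule Ri)
    show "AE v in lborel. \<bar>indicator {0<..<1} (v + h) * f (v + h) - indicator {0<..<1} v * f v\<bar> \<le> R v"
      using AE_lborel_singleton[of "1 - h"]
    proof eventually_elim
      case (elim v)
      consider "v \<le> - h" | "- h < v" "v \<le> 0" | "0 < v" "v < 1 - h" | "1 - h < v" "v < 1" | "1 \<le> v"
        using elim by linarith
      then show ?case
      proof cases
        case 1 then show ?thesis using h unfolding R_def G_def by (simp add: indicator_def)
      next
        case 2 then show ?thesis using h fg[of "v + h"] unfolding R_def G_def by (simp add: indicator_def)
      next
        case 3 then show ?thesis using h fd[of v] unfolding R_def G_def by (simp add: indicator_def)
      next
        case 4 then show ?thesis using h fg[of v] unfolding R_def G_def by (simp add: indicator_def)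
      next
        case 5 then show ?thesis using h unfolding R_def G_def by (simp add: indicator_def)
      qed
    qed
    show "AE v in lborel. 0 \<le> R v"
      using AE_lborel_singleton[of "1 - h"]
    proof eventually_elim
      case (elim v)
      consider "v \<le> - h" | "- h < v" "v \<le> 0" | "0 < v" "v < 1 - h" | "1 - h < v" "v < 1" | "1 \<le> v"
        using elim by linarith
      then show ?case
      proof cases
        case 1 then show ?thesis using h unfolding R_def G_def by (simp add: indicator_def)
      next
        case 2 then show ?thesis using h fg[of "v + h"] unfolding R_def G_def by (simp add: indicator_def)
      next
        case 3 then show ?thesis using h fd[of v] unfolding R_def G_def by (simp add: indicator_def)
      next
        case 4 then show ?thesis using h fg[of v] unfolding R_def G_def by (simp add: indicator_def)
      next
        case 5 then show ?thesis using h unfolding R_def G_def by (simp add: indicator_def)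
      qed
    qed
  qed
  also have "integral\<^sup>L lborel R = (integral\<^sup>L lborel (\<lambda>v. G (v + h)) - integral\<^sup>L lborel G)
      + 2 * integral\<^sup>L lborel (\<lambda>v. indicator {1-h<..<1} v * g v) + integral\<^sup>L lborel (\<lambda>v. indicator {0<..<1-h} v * e v)"
    unfolding R_def[abs_def] using Ghi Gi g2i ei' by simp
  also have "\<dots> = 2 * (LBINT v:{1-h<..<1}. g v) + (LBINT v:{0<..<1-h}. e v)"
    unfolding sl_def shift_int(2)[OF Gi] by simp
  finally show ?thesis .
qed


lemma int_inv:
  fixes h :: real
  assumes "0 < h" "h < 1/2"
  shows "set_integrable lborel {h<..<1/2} (\<lambda>v. h / v)
    \<and> (LBINT v:{h<..<1/2}. h / v) = h * ln (1/2) - h * ln h"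
proof (rule FTC_Ioo[where F="\<lambda>v. h * ln v"])
  fix x :: real assume x: "h < x" "x < 1/2"
  show "DERIV (\<lambda>v. h * ln v) x :> h / x" using x assms
    by (auto intro!: derivative_eq_intros)
  show "isCont (\<lambda>v. h / v) x" using x assms by (auto intro!: continuous_intros)
  show "0 \<le> h / x" using x assms by simp
next
  show "((\<lambda>v. h * ln v) \<longlongrightarrow> h * ln h) (at_right h)"
    using assms by (intro tendsto_eq_intros refl) auto
  show "((\<lambda>v. h * ln v) \<longlongrightarrow> h * ln (1/2)) (at_left (1/2))"
    using assms by (intro tendsto_eq_intros refl) auto
qed (use assms in auto)

definition e :: "real \<Rightarrow> real \<Rightarrow> real" where
  "e h v = 2 * (ln (1 / v) - ln (1 / (v + h))) * A v"

lemma e_measurable[measurable]: "e h \<in> borel_measurable lborel"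
  unfolding e_def[abs_def] by measurable

definition E :: "real \<Rightarrow> real \<Rightarrow> real" where
  "E h v = 2 * A (1/2) * (indicator {0<..<h} v * ln (2 * h / (v - 0)))
         + 2 * A (1/2) * (indicator {h<..<1/2} v * (h / v))
         + 20 * h * (indicator {1/2<..<1-h} v * ((1 - ln (1 - v)) / (1 - v)))"

lemma E_int: fixes h :: real assumes h: "0 < h" "h < 1/2"
  shows "integrable lborel (E h) \<and> integral\<^sup>L lborel (E h)
     = 2 * A (1/2) * (h * (1 + ln (2 * h / h))) + 2 * A (1/2) * (h * ln (1/2) - h * ln h)
       + 20 * h * (((1 - ln h)\<^sup>2 - (1 + ln 2)\<^sup>2) / 2)"
proof -
  have I1: "set_integrable lborel {0<..<0+h} (\<lambda>v. ln (2 * h / (v - 0)))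
    \<and> (LBINT v:{0<..<0+h}. ln (2 * h / (v - 0))) = h * (1 + ln (2 * h / h))"
    by (rule int_ln_sing) (use h in auto)
  note I2 = int_inv[OF h]
  note I3 = int_log_over[OF h]
  have i1: "integrable lborel (\<lambda>v::real. indicator {0<..<h} v * ln (2 * h / (v - 0)))"
    using I1 unfolding si_def by simp
  have i2: "integrable lborel (\<lambda>v::real. indicator {h<..<1/2} v * (h / v))"
    using I2 unfolding si_def by simp
  have i3: "integrable lborel (\<lambda>v::real. indicator {1/2<..<1-h} v * ((1 - ln (1 - v)) / (1 - v)))"
    using I3 unfolding si_def by simp
  have Ee: "E h = (\<lambda>v. 2 * A (1/2) * (indicator {0<..<h} v * ln (2 * h / (v - 0)))
         + 2 * A (1/2) * (indicator {h<..<1/2} v * (h / v))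
         + 20 * h * (indicator {1/2<..<1-h} v * ((1 - ln (1 - v)) / (1 - v))))"
    by (rule ext) (simp only: E_def)
  have j1: "integrable lborel (\<lambda>v::real. 2 * A (1/2) * (indicator {0<..<h} v * ln (2 * h / (v - 0))))"
    by (rule integrable_mult_right) (rule i1)
  have j2: "integrable lborel (\<lambda>v::real. 2 * A (1/2) * (indicator {h<..<1/2} v * (h / v)))"
    by (rule integrable_mult_right) (rule i2)
  have j3: "integrable lborel (\<lambda>v::real. 20 * h * (indicator {1/2<..<1-h} v * ((1 - ln (1 - v)) / (1 - v))))"
    by (rule integrable_mult_right) (rule i3)
  have j12: "integrable lborel (\<lambda>v::real. 2 * A (1/2) * (indicator {0<..<h} v * ln (2 * h / (v - 0)))
         + 2 * A (1/2) * (indicator {h<..<1/2} v * (h / v)))"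
    by (rule Bochner_Integration.integrable_add[OF j1 j2])
  have int: "integrable lborel (E h)" unfolding Ee by (rule Bochner_Integration.integrable_add[OF j12 j3])
  have "integral\<^sup>L lborel (E h) = 2 * A (1/2) * integral\<^sup>L lborel (\<lambda>v::real. indicator {0<..<h} v * ln (2 * h / (v - 0)))
     + 2 * A (1/2) * integral\<^sup>L lborel (\<lambda>v::real. indicator {h<..<1/2} v * (h / v))
     + 20 * h * integral\<^sup>L lborel (\<lambda>v::real. indicator {1/2<..<1-h} v * ((1 - ln (1 - v)) / (1 - v)))"
    unfolding Ee
    by (simp only: Bochner_Integration.integral_add[OF j12 j3] Bochner_Integration.integral_add[OF j1 j2] integral_mult_right_zero)
  also have "\<dots> = 2 * A (1/2) * (h * (1 + ln (2 * h / h))) + 2 * A (1/2) * (h * ln (1/2) - h * ln h)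
       + 20 * h * (((1 - ln h)\<^sup>2 - (1 + ln 2)\<^sup>2) / 2)"
    using I1 I2 I3 unfolding sl_def by simp
  finally show ?thesis using int by simp
qed

lemma e_le_E: fixes h v :: real assumes h: "0 < h" "h < 1/2" and v: "v \<noteq> h" "v \<noteq> 1/2"
  shows "\<bar>indicator {0<..<1-h} v * e h v\<bar> \<le> E h v"
proof -
  have A0: "0 \<le> A (1/2)" by (rule A_nonneg)
  have Enn: "0 \<le> E h v"
  proof -
    have p1: "0 \<le> indicator {0<..<h} v * ln (2 * h / (v - 0))"
    proof (cases "v \<in> {0<..<h}")
      case True then have "1 \<le> 2 * h / (v - 0)" by (simp add: field_simps)
      then show ?thesis using True by simp
    qed simp
    have p2: "0 \<le> indicator {h<..<1/2} v * (h / v)"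
      by (cases "v \<in> {h<..<1/2}") (use h in auto)
    have p3: "0 \<le> indicator {1/2<..<1-h} v * ((1 - ln (1 - v)) / (1 - v))"
    proof (cases "v \<in> {1/2<..<1-h}")
      case True
      have "ln (1 - v) \<le> (1 - v) - 1" by (rule ln_le_minus_one) (use True h in auto)
      moreover have "0 < v" using True h by simp
      ultimately have "0 \<le> 1 - ln (1 - v)" by linarith
      then have "0 \<le> (1 - ln (1 - v)) / (1 - v)" by (rule divide_nonneg_pos) (use True h in auto)
      then show ?thesis using True by simp
    qed simp
    have c1: "0 \<le> 2 * A (1/2)" using A0 by simp
    have c3: "0 \<le> 20 * h" using h by simp
    show ?thesis unfolding E_def
      by (rule add_nonneg_nonneg[OF add_nonneg_nonneg[OF mult_nonneg_nonneg[OF c1 p1] mult_nonneg_nonneg[OF c1 p2]] mult_nonneg_nonneg[OF c3 p3]])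
  qed
  consider "v \<le> 0 \<or> 1 - h \<le> v" | "0 < v" "v < h" | "h < v" "v < 1/2" | "1/2 < v" "v < 1 - h"
    using v h by linarith
  then show ?thesis
  proof cases
    case 1 then show ?thesis using Enn by (auto simp: indicator_def)
  next
    case 2
    have d: "ln (1 / v) - ln (1 / (v + h)) = ln ((v + h) / v)" using 2 h by (simp add: ln_div)
    have d0: "0 \<le> ln ((v + h) / v)" using 2 h by simp
    have d1: "ln ((v + h) / v) \<le> ln (2 * h / (v - 0))" using 2 h
      by (subst ln_le_cancel_iff) (auto intro!: divide_right_mono)
    have a: "0 \<le> A v" "A v \<le> A (1/2)" using A_nonneg A_mono[of v "1/2"] 2 h by auto
    have "e h v \<le> 2 * ln (2 * h / (v - 0)) * A (1/2)"
      unfolding e_def d using d0 d1 a by (intro mult_mono) auto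
    moreover have "0 \<le> e h v" unfolding e_def d using d0 a by simp
    ultimately show ?thesis using 2 h unfolding E_def by (simp add: indicator_def algebra_simps)
  next
    case 3
    have d: "ln (1 / v) - ln (1 / (v + h)) = ln (1 + h / v)" using 3 h by (simp add: ln_div field_simps)
    have d0: "0 \<le> ln (1 + h / v)" using 3 h by simp
    have d1: "ln (1 + h / v) \<le> h / v" using 3 h by (intro ln_add_one_self_le_self) simp
    have a: "0 \<le> A v" "A v \<le> A (1/2)" using A_nonneg A_mono[of v "1/2"] 3 h by auto
    have "e h v \<le> 2 * (h / v) * A (1/2)"
      unfolding e_def d using d0 d1 a by (intro mult_mono) auto
    moreover have "0 \<le> e h v" unfolding e_def d using d0 a by simp
    ultimately show ?thesis using 3 h unfolding E_def by (simp add: indicator_def algebra_simps)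
  next
    case 4
    have d: "ln (1 / v) - ln (1 / (v + h)) = ln (1 + h / v)" using 4 h by (simp add: ln_div field_simps)
    have d0: "0 \<le> ln (1 + h / v)" using 4 h by simp
    have "ln (1 + h / v) \<le> h / v" using 4 h by (intro ln_add_one_self_le_self) simp
    also have "h / v \<le> h / (1/2)" using 4 h by (intro divide_left_mono) auto
    finally have d1: "ln (1 + h / v) \<le> 2 * h" by simp
    have a: "0 \<le> A v" "A v \<le> 5 * (1 - ln (1 - v)) / (1 - v)" using A_nonneg A_near1[of v] 4 h by auto
    have "e h v \<le> 2 * (2 * h) * (5 * (1 - ln (1 - v)) / (1 - v))"
      unfolding e_def d using d0 d1 a by (intro mult_mono) auto
    moreover have "0 \<le> e h v" unfolding e_def d using d0 a by simp
    ultimately show ?thesis using 4 h unfolding E_def by (simp add: indicator_def algebra_simps)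
  qed
qed

lemma e_integral: fixes h :: real assumes h: "0 < h" "h < 1/2"
  shows "set_integrable lborel {0<..<1-h} (e h)
     \<and> (LBINT v:{0<..<1-h}. e h v) \<le> 2 * A (1/2) * h * (1 - ln h) + 10 * h * (1 - ln h)\<^sup>2"
proof -
  note EI = E_int[OF h]
  have ae: "AE v in lborel. \<bar>indicator {0<..<1-h} v * e h v\<bar> \<le> E h v"
    using AE_two[of h "1/2"] by eventually_elim (use e_le_E h in auto)
  have *: "integrable lborel (\<lambda>v. indicator {0<..<1-h} v * e h v)
      \<and> integral\<^sup>L lborel (\<lambda>v. indicator {0<..<1-h} v * e h v) \<le> integral\<^sup>L lborel (E h)"
    by (rule int_bound_le) (use EI ae in auto)
  have l1: "ln (2 * h / h) = ln 2" using h by simp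
  have l2: "ln (1/2::real) = - ln 2" by (simp add: ln_div)
  have "integral\<^sup>L lborel (E h) = 2 * A (1/2) * (h * (1 + ln (2 * h / h))) + 2 * A (1/2) * (h * ln (1/2) - h * ln h)
       + 20 * h * (((1 - ln h)\<^sup>2 - (1 + ln 2)\<^sup>2) / 2)" using EI by simp
  also have "\<dots> = 2 * A (1/2) * h * (1 - ln h) + 10 * h * ((1 - ln h)\<^sup>2 - (1 + ln 2)\<^sup>2)"
    unfolding l1 l2 by (simp add: field_simps)
  also have "\<dots> \<le> 2 * A (1/2) * h * (1 - ln h) + 10 * h * (1 - ln h)\<^sup>2"
    using h by (simp add: algebra_simps)
  finally show ?thesis using * unfolding si_def sl_def by simp
qed


definition Cx :: "real \<Rightarrow> real" where "Cx v = ln (1 / v) * A v - B v"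

lemma Cx_measurable[measurable]: "Cx \<in> borel_measurable lborel"
  unfolding Cx_def[abs_def] by measurable

lemma Cx_eq: "0 < v \<Longrightarrow> v < 1 \<Longrightarrow> Cf v = Cx v"
  unfolding Cx_def by (rule Cf_eq(2))

lemma g_tail: fixes h :: real assumes h: "0 < h" "h \<le> 1/2"
  shows "(LBINT v:{1-h<..<1}. g v) \<le> 15 * (h * ((1 - ln h)\<^sup>2 + 2 * (1 - ln h) + 2))"
proof -
  have sub: "{1-h<..<1} \<subseteq> {0<..<1::real}" using h by auto
  have gi: "set_integrable lborel {1-h<..<1} g"
    by (rule set_integrable_subset[OF g_integrable _ sub]) simp
  note I = int_logsq_end[of h]
  have mi: "set_integrable lborel {1-h<..<1} (\<lambda>v. 15 * (1 - ln (1 - v))\<^sup>2)"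
    using I h by auto
  have "(LBINT v:{1-h<..<1}. g v) \<le> (LBINT v:{1-h<..<1}. 15 * (1 - ln (1 - v))\<^sup>2)"
  proof (rule set_integral_mono[OF gi mi])
    fix v assume v: "v \<in> {1-h<..<1}"
    then show "g v \<le> 15 * (1 - ln (1 - v))\<^sup>2" using g_near1[of v] h unfolding g_def by auto
  qed
  also have "\<dots> = 15 * (h * ((1 - ln h)\<^sup>2 + 2 * (1 - ln h) + 2))" using I h by simp
  finally show ?thesis .
qed

lemma Cx_diff: fixes v h :: real assumes "0 < v" "0 < h" "v + h < 1"
  shows "\<bar>Cx (v + h) - Cx v\<bar> \<le> g (v + h) - g v + e h v"
proof -
  define a0 where "a0 = A v"
  define a1 where "a1 = A (v + h)"
  define b0 where "b0 = B v"
  define b1 where "b1 = B (v + h)"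
  define p0 where "p0 = ln (1 / v)"
  define p1 where "p1 = ln (1 / (v + h))"
  have a: "0 \<le> a0" "a0 \<le> a1" unfolding a0_def a1_def using A_nonneg A_mono[of v "v + h"] assms by auto
  have b: "b0 \<le> b1" unfolding b0_def b1_def using B_mono[of v "v + h"] assms by auto
  have p: "0 \<le> p1" "p1 \<le> p0" unfolding p0_def p1_def using assms
    by (auto simp: field_simps intro!: divide_left_mono)
  have X: "0 \<le> p1 * (a1 - a0)" using a p by simp
  have Y: "0 \<le> (p0 - p1) * a0" using a p by simp
  have "Cx (v + h) - Cx v = p1 * (a1 - a0) - (p0 - p1) * a0 - (b1 - b0)"
    unfolding Cx_def a0_def a1_def b0_def b1_def p0_def p1_def by (simp add: algebra_simps)
  moreover have "g (v + h) - g v + e h v = p1 * (a1 - a0) + (p0 - p1) * a0 + (b1 - b0)"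
    unfolding g_def e_def a0_def a1_def b0_def b1_def p0_def p1_def by (simp add: algebra_simps)
  ultimately show ?thesis using X Y b by linarith
qed

lemma Cx_le_g: "0 < v \<Longrightarrow> v < 1 \<Longrightarrow> \<bar>Cx v\<bar> \<le> g v"
  using Cf_le_g Cx_eq by fastforce

lemma omegaC: fixes h :: real assumes h: "0 < h" "h \<le> 1/4"
  shows "integral\<^sup>L lborel (\<lambda>v. \<bar>indicator {0<..<1} (v + h) * Cx (v + h) - indicator {0<..<1} v * Cx v\<bar>)
     \<le> (160 + 2 * A (1/2)) * h * (1 - ln h)\<^sup>2"
proof -
  have h2: "h < 1/2" using h by simp
  note EI = e_integral[OF h(1) h2]
  have "integral\<^sup>L lborel (\<lambda>v. \<bar>indicator {0<..<1} (v + h) * Cx (v + h) - indicator {0<..<1} v * Cx v\<bar>)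
     \<le> 2 * (LBINT v:{1-h<..<1}. g v) + (LBINT v:{0<..<1-h}. e h v)"
  proof (rule modulus_bound)
    show "set_integrable lborel {0<..<1 - h} (e h)" using EI by simp
  qed (use h g_integrable Cx_le_g Cx_diff in auto)
  also have "\<dots> \<le> 2 * (15 * (h * ((1 - ln h)\<^sup>2 + 2 * (1 - ln h) + 2)))
      + (2 * A (1/2) * h * (1 - ln h) + 10 * h * (1 - ln h)\<^sup>2)"
    using g_tail[of h] EI h by (intro add_mono) auto
  also have "\<dots> \<le> (160 + 2 * A (1/2)) * h * (1 - ln h)\<^sup>2"
  proof -
    define M where "M = 1 - ln h"
    have M1: "1 \<le> M" unfolding M_def using h by simp
    have MM: "M \<le> M\<^sup>2" using M1 by (simp add: power2_eq_square)
    have M2: "M\<^sup>2 + 2 * M + 2 \<le> 5 * M\<^sup>2" using M1 MM by linarith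
    have t1: "h * (M\<^sup>2 + 2 * M + 2) \<le> h * (5 * M\<^sup>2)" by (rule mult_left_mono[OF M2]) (use h in simp)
    have t2: "(A (1/2) * h) * M \<le> (A (1/2) * h) * M\<^sup>2"
      by (rule mult_left_mono[OF MM]) (use h A_nonneg in simp)
    have "2 * (15 * (h * (M\<^sup>2 + 2 * M + 2))) + (2 * A (1/2) * h * M + 10 * h * M\<^sup>2)
        \<le> (160 + 2 * A (1/2)) * h * M\<^sup>2"
      using t1 t2 by (simp add: algebra_simps)
    then show ?thesis unfolding M_def .
  qed
  finally show ?thesis .
qed


lemma integrable_eqI2: "integrable M p \<Longrightarrow> (\<And>x. p x = q x) \<Longrightarrow> integrable M q"
  by (metis ext)

lemma tail_e_bound: fixes h :: real assumes h: "0 < h" "h \<le> 1/4"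
  shows "2 * (LBINT v:{1-h<..<1}. g v) + (LBINT v:{0<..<1-h}. e h v) \<le> (160 + 2 * A (1/2)) * h * (1 - ln h)\<^sup>2"
proof -
  have h2: "h < 1/2" using h by simp
  note EI = e_integral[OF h(1) h2]
  have "2 * (LBINT v:{1-h<..<1}. g v) + (LBINT v:{0<..<1-h}. e h v) \<le> 2 * (15 * (h * ((1 - ln h)\<^sup>2 + 2 * (1 - ln h) + 2)))
      + (2 * A (1/2) * h * (1 - ln h) + 10 * h * (1 - ln h)\<^sup>2)"
    using g_tail[of h] EI h by (intro add_mono) auto
  also have "\<dots> \<le> (160 + 2 * A (1/2)) * h * (1 - ln h)\<^sup>2"
  proof -
    define M where "M = 1 - ln h"
    have M1: "1 \<le> M" unfolding M_def using h by simp
    have MM: "M \<le> M\<^sup>2" using M1 by (simp add: power2_eq_square)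
    have M2: "M\<^sup>2 + 2 * M + 2 \<le> 5 * M\<^sup>2" using M1 MM by linarith
    have t1: "h * (M\<^sup>2 + 2 * M + 2) \<le> h * (5 * M\<^sup>2)" by (rule mult_left_mono[OF M2]) (use h in simp)
    have t2: "(A (1/2) * h) * M \<le> (A (1/2) * h) * M\<^sup>2"
      by (rule mult_left_mono[OF MM]) (use h A_nonneg in simp)
    have "2 * (15 * (h * (M\<^sup>2 + 2 * M + 2))) + (2 * A (1/2) * h * M + 10 * h * M\<^sup>2)
        \<le> (160 + 2 * A (1/2)) * h * M\<^sup>2"
      using t1 t2 by (simp add: algebra_simps)
    then show ?thesis unfolding M_def .
  qed
  finally show ?thesis .
qed

lemma gshift: fixes h :: real assumes h: "0 < h" "h < 1"
  shows "set_integrable lborel {0<..<1-h} (\<lambda>v. g (v + h))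
     \<and> (LBINT v:{0<..<1-h}. g (v + h)) \<le> (LBINT v:{0<..<1}. g v)"
proof -
  define G where "G v = indicator {0<..<1} v * g v" for v :: real
  have Gi: "integrable lborel G" using g_integrable unfolding si_def G_def[abs_def] .
  note Gh = shift_int[OF Gi, of h]
  have "integrable lborel (\<lambda>v. indicator {0<..<1-h} v *\<^sub>R G (v + h))"
    by (rule integrable_mult_indicator[OF _ Gh(1)]) simp
  then have i: "integrable lborel (\<lambda>v. indicator {0<..<1-h} v * g (v + h))"
    by (rule integrable_eqI2) (use h in \<open>auto simp: G_def indicator_def\<close>)
  have "integral\<^sup>L lborel (\<lambda>v. indicator {0<..<1-h} v * g (v + h)) \<le> integral\<^sup>L lborel (\<lambda>v. G (v + h))"
  proof (rule integral_mono[OF i Gh(1)])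
    fix v :: real
    show "indicator {0<..<1-h} v * g (v + h) \<le> G (v + h)"
      using g_nonneg[of "v + h"] h by (auto simp: G_def indicator_def)
  qed
  also have "\<dots> = (LBINT v:{0<..<1}. g v)" using Gh(2) unfolding sl_def G_def by simp
  finally show ?thesis using i unfolding si_def sl_def by simp
qed

lemma omegaVC: fixes h :: real assumes h: "0 < h" "h \<le> 1/4"
  shows "integral\<^sup>L lborel (\<lambda>v. \<bar>indicator {0<..<1} (v + h) * ((v + h) * Cx (v + h)) - indicator {0<..<1} v * (v * Cx v)\<bar>)
     \<le> (160 + 2 * A (1/2) + (LBINT v:{0<..<1}. g v)) * h * (1 - ln h)\<^sup>2"
proof -
  have h2: "h < 1/2" using h by simp
  note EI = e_integral[OF h(1) h2]
  have h1: "h < 1" using h by simp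
  note GS = gshift[OF h(1) h1]
  have e2i: "set_integrable lborel {0<..<1-h} (\<lambda>v. e h v + h * g (v + h))"
    using EI GS by (intro set_integral_add(1) set_integrable_mult_right) auto
  have "integral\<^sup>L lborel (\<lambda>v. \<bar>indicator {0<..<1} (v + h) * ((v + h) * Cx (v + h)) - indicator {0<..<1} v * (v * Cx v)\<bar>)
     \<le> 2 * (LBINT v:{1-h<..<1}. g v) + (LBINT v:{0<..<1-h}. e h v + h * g (v + h))"
  proof (rule modulus_bound[where f="\<lambda>v. v * Cx v"])
    show "set_integrable lborel {0<..<1 - h} (\<lambda>v. e h v + h * g (v + h))" using e2i by simp
    show "(\<lambda>v. v * Cx v) \<in> borel_measurable lborel" by measurable
    fix v :: real
    assume v: "0 < v" "v < 1"
    have "\<bar>v * Cx v\<bar> = v * \<bar>Cx v\<bar>" using v by (simp add: abs_mult)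
    also have "\<dots> \<le> \<bar>Cx v\<bar>" using v by (intro mult_left_le_one_le) auto
    also have "\<dots> \<le> g v" using Cx_le_g[of v] v by simp
    finally show "\<bar>v * Cx v\<bar> \<le> g v" .
  next
    fix v :: real
    assume v: "0 < v" "v < 1 - h"
    have c1: "\<bar>Cx (v + h)\<bar> \<le> g (v + h)" using Cx_le_g[of "v + h"] v h by simp
    have d: "\<bar>Cx (v + h) - Cx v\<bar> \<le> g (v + h) - g v + e h v" using Cx_diff[of v h] v h by simp
    have "(v + h) * Cx (v + h) - v * Cx v = v * (Cx (v + h) - Cx v) + h * Cx (v + h)"
      by (simp add: algebra_simps)
    then have "\<bar>(v + h) * Cx (v + h) - v * Cx v\<bar> \<le> v * \<bar>Cx (v + h) - Cx v\<bar> + h * \<bar>Cx (v + h)\<bar>"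
      using v h by (simp add: abs_mult order_trans[OF abs_triangle_ineq])
    also have "\<dots> \<le> 1 * \<bar>Cx (v + h) - Cx v\<bar> + h * g (v + h)"
      using v h c1 by (intro add_mono mult_right_mono mult_left_mono) auto
    finally show "\<bar>(v + h) * Cx (v + h) - v * Cx v\<bar> \<le> g (v + h) - g v + (e h v + h * g (v + h))"
      using d by simp
  qed (use h g_integrable in auto)
  also have "(LBINT v:{0<..<1-h}. e h v + h * g (v + h)) = (LBINT v:{0<..<1-h}. e h v) + h * (LBINT v:{0<..<1-h}. g (v + h))"
    using EI GS by (subst set_integral_add(2)) auto
  also have "2 * (LBINT v:{1-h<..<1}. g v) + ((LBINT v:{0<..<1-h}. e h v) + h * (LBINT v:{0<..<1-h}. g (v + h)))
      \<le> (160 + 2 * A (1/2)) * h * (1 - ln h)\<^sup>2 + h * (LBINT v:{0<..<1}. g v)"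
  proof -
    have "integral\<^sup>L lborel (\<lambda>v. \<bar>indicator {0<..<1} (v + h) * Cx (v + h) - indicator {0<..<1} v * Cx v\<bar>) \<ge> 0"
      by simp
    have a: "2 * (LBINT v:{1-h<..<1}. g v) + (LBINT v:{0<..<1-h}. e h v) \<le> (160 + 2 * A (1/2)) * h * (1 - ln h)\<^sup>2"
      by (rule tail_e_bound[OF h])
    have b: "h * (LBINT v:{0<..<1-h}. g (v + h)) \<le> h * (LBINT v:{0<..<1}. g v)"
      using GS h by (intro mult_left_mono) auto
    show ?thesis using a b by linarith
  qed
  also have "\<dots> \<le> (160 + 2 * A (1/2) + (LBINT v:{0<..<1}. g v)) * h * (1 - ln h)\<^sup>2"
  proof -
    have Ng: "0 \<le> (LBINT v:{0<..<1}. g v)" unfolding sl_def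
      by (intro integral_nonneg_AE AE_I2) (auto simp: indicator_def g_nonneg)
    have "1 \<le> (1 - ln h)\<^sup>2" using h by (simp add: one_le_power)
    then have "h * (LBINT v:{0<..<1}. g v) * 1 \<le> h * (LBINT v:{0<..<1}. g v) * (1 - ln h)\<^sup>2"
      using Ng h by (intro mult_left_mono) auto
    then show ?thesis by (simp add: algebra_simps)
  qed
  finally show ?thesis .
qed


lemma fourier_final:
  fixes f \<phi> :: "real \<Rightarrow> real" and K :: real
  assumes fi: "set_integrable lborel {0<..<1} f" and K: "0 \<le> K"
    and \<phi>m: "\<phi> \<in> borel_measurable borel" and \<phi>1: "\<And>x. \<bar>\<phi> x\<bar> \<le> 1" and \<phi>p: "\<And>x. \<phi> (x + pi) = - \<phi> x"
    and om: "\<And>h. 0 < h \<Longrightarrow> h \<le> 1/4 \<Longrightarrow>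
      integral\<^sup>L lborel (\<lambda>v. \<bar>indicator {0<..<1} (v + h) * f (v + h) - indicator {0<..<1} v * f v\<bar>)
        \<le> K * h * (1 - ln h)\<^sup>2"
  shows "(\<lambda>y. LBINT v:{0<..<1}. f v * \<phi> (v * y)) \<in> O[at_top](\<lambda>y. (ln y)\<^sup>2 / y)"
proof (rule bigoI)
  show "eventually (\<lambda>y. norm (LBINT v:{0<..<1}. f v * \<phi> (v * y)) \<le> (2 * pi * K) * norm ((ln y)\<^sup>2 / y)) at_top"
    using eventually_ge_at_top[of "4 * pi"]
  proof eventually_elim
    case (elim y)
    define h where "h = pi / y"
    have y0: "0 < y" using elim pi_gt_zero by linarith
    have h0: "0 < h" unfolding h_def using y0 by simp
    have h4: "h \<le> 1/4" unfolding h_def using elim y0 by (simp add: field_simps)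
    define F where "F v = indicator {0<..<1} v * f v" for v
    have Fi: "integrable lborel F" using fi unfolding si_def F_def[abs_def] .
    have eq: "(LBINT v:{0<..<1}. f v * \<phi> (v * y)) = integral\<^sup>L lborel (\<lambda>v. F v * \<phi> (v * y))"
      unfolding sl_def F_def by (simp add: mult.assoc)
    have "\<bar>integral\<^sup>L lborel (\<lambda>v. F v * \<phi> (v * y))\<bar> \<le> 1/2 * integral\<^sup>L lborel (\<lambda>v. \<bar>F (v + pi / y) - F v\<bar>)"
      by (rule fourier_bound[OF Fi y0 \<phi>m \<phi>1 \<phi>p])
    also have "integral\<^sup>L lborel (\<lambda>v. \<bar>F (v + pi / y) - F v\<bar>) \<le> K * h * (1 - ln h)\<^sup>2"
      using om[OF h0 h4] unfolding F_def h_def by simp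
    also have "1/2 * (K * h * (1 - ln h)\<^sup>2) \<le> 1/2 * (K * h * (2 * ln y)\<^sup>2)"
    proof -
      have "exp 1 \<le> y" using exp_le elim pi_gt3 by linarith
      then have ly: "1 \<le> ln y" using y0 by (metis exp_gt_zero ln_exp ln_le_cancel_iff)
      have lh: "ln h = ln pi - ln y" unfolding h_def using y0 by (simp add: ln_div)
      have lp: "0 \<le> ln pi" using pi_gt3 by simp
      have "ln h \<le> h - 1" using h0 by (rule ln_le_minus_one)
      then have a: "0 \<le> 1 - ln h" using h4 by linarith
      have b: "1 - ln h \<le> 2 * ln y" using lh lp ly by linarith
      have "(1 - ln h)\<^sup>2 \<le> (2 * ln y)\<^sup>2" using a b by (intro power_mono) auto
      then show ?thesis using K h0 by (intro mult_left_mono) auto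
    qed
    also have "1/2 * (K * h * (2 * ln y)\<^sup>2) = (2 * pi * K) * ((ln y)\<^sup>2 / y)"
      unfolding h_def using y0 by (simp add: field_simps power2_eq_square)
    also have "\<dots> = (2 * pi * K) * norm ((ln y)\<^sup>2 / y)" using y0 by simp
    finally show ?case using eq by simp
  qed
qed

lemma Ng_nonneg: "0 \<le> (LBINT v:{0<..<1}. g v)"
  unfolding sl_def by (intro integral_nonneg_AE AE_I2) (auto simp: indicator_def g_nonneg)

theorem lemma7:
  shows "(\<forall>v. 0 < v \<and> v < 1 \<longrightarrow> set_integrable lborel {1<..} (Cint v))
     \<and> set_integrable lborel {1<..} (\<lambda>u. Lf u / u ^ 4)
     \<and> set_integrable lborel {1<..} (\<lambda>u. Lf u * ln (1 / u) / u ^ 4)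
     \<and> (\<lambda>v. Cf v - c0 * ln (1 / v) - d0) \<in> O[at_right 0](\<lambda>v. v\<^sup>2 * ln (1 / v))
     \<and> set_integrable lborel {0<..<1} Cf
     \<and> set_integrable lborel {0<..<1} (\<lambda>v. v * Cf v)
     \<and> (\<lambda>y. LBINT v:{0<..<1}. Cf v * cos (v * y)) \<in> O[at_top](\<lambda>y. (ln y)\<^sup>2 / y)
     \<and> (\<lambda>y. LBINT v:{0<..<1}. v * Cf v * sin (v * y)) \<in> O[at_top](\<lambda>y. (ln y)\<^sup>2 / y)"
proof (intro conjI)
  show "\<forall>v. 0 < v \<and> v < 1 \<longrightarrow> set_integrable lborel {1<..} (Cint v)" using Cf_eq(1) by auto
  show "set_integrable lborel {1<..} (\<lambda>u. Lf u / u ^ 4)" by (rule c0d0_integrable(1))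
  show "set_integrable lborel {1<..} (\<lambda>u. Lf u * ln (1 / u) / u ^ 4)" by (rule c0d0_integrable(2))
  show "(\<lambda>v. Cf v - c0 * ln (1 / v) - d0) \<in> O[at_right 0](\<lambda>v. v\<^sup>2 * ln (1 / v))" by (rule part_i)
  show "set_integrable lborel {0<..<1} Cf" by (rule Cf_integrable(1))
  show "set_integrable lborel {0<..<1} (\<lambda>v. v * Cf v)" by (rule Cf_integrable(2))
  have ind1: "\<And>x. indicator {0<..<1} x * Cf x = indicator {0<..<1} x * Cx x"
    by (auto simp: indicator_def Cx_eq)
  have ind2: "\<And>x. indicator {0<..<1} x * (x * Cf x) = indicator {0<..<1} x * (x * Cx x)"
    by (auto simp: indicator_def Cx_eq)
  show "(\<lambda>y. LBINT v:{0<..<1}. Cf v * cos (v * y)) \<in> O[at_top](\<lambda>y. (ln y)\<^sup>2 / y)"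
  proof (rule fourier_final[where K="160 + 2 * A (1/2)"])
    show "set_integrable lborel {0<..<1} Cf" by (rule Cf_integrable(1))
    show "0 \<le> 160 + 2 * A (1/2)" using A_nonneg[of "1/2"] by simp
    show "(cos::real\<Rightarrow>real) \<in> borel_measurable borel"
      by (rule borel_measurable_continuous_onI) (rule continuous_on_cos[OF continuous_on_id, unfolded id_def])
    show "\<And>x::real. \<bar>cos x\<bar> \<le> 1" by simp
    show "\<And>x::real. cos (x + pi) = - cos x" by simp
    fix h :: real assume h: "0 < h" "h \<le> 1/4"
    show "integral\<^sup>L lborel (\<lambda>v. \<bar>indicator {0<..<1} (v + h) * Cf (v + h) - indicator {0<..<1} v * Cf v\<bar>)
        \<le> (160 + 2 * A (1/2)) * h * (1 - ln h)\<^sup>2"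
      unfolding ind1 using omegaC[OF h] .
  qed
  show "(\<lambda>y. LBINT v:{0<..<1}. v * Cf v * sin (v * y)) \<in> O[at_top](\<lambda>y. (ln y)\<^sup>2 / y)"
  proof (rule fourier_final[where K="160 + 2 * A (1/2) + (LBINT v:{0<..<1}. g v)" and f="\<lambda>v. v * Cf v"])
    show "set_integrable lborel {0<..<1} (\<lambda>v. v * Cf v)" by (rule Cf_integrable(2))
    show "0 \<le> 160 + 2 * A (1/2) + (LBINT v:{0<..<1}. g v)" using A_nonneg[of "1/2"] Ng_nonneg by simp
    show "(sin::real\<Rightarrow>real) \<in> borel_measurable borel"
      by (rule borel_measurable_continuous_onI) (rule continuous_on_sin[OF continuous_on_id, unfolded id_def])
    show "\<And>x::real. \<bar>sin x\<bar> \<le> 1" by simp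
    show "\<And>x::real. sin (x + pi) = - sin x" by simp
    fix h :: real assume h: "0 < h" "h \<le> 1/4"
    show "integral\<^sup>L lborel (\<lambda>v. \<bar>indicator {0<..<1} (v + h) * ((v + h) * Cf (v + h)) - indicator {0<..<1} v * (v * Cf v)\<bar>)
        \<le> (160 + 2 * A (1/2) + (LBINT v:{0<..<1}. g v)) * h * (1 - ln h)\<^sup>2"
      unfolding ind2 using omegaVC[OF h] .
  qed
qed


end
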